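(* Let $((f_t),(g_t),(h_t))$ be a $W_{1,+}$-geodesic on $G$ with associated function $m$ and functions $P_t,Q_t$ as in the context. Then there exist two functions $a,b:G\to\mathbb{R}$ such that for all $t\in[0,1]$ and $z\in G$, $$P_t(z)=\frac{1}{m(z)}\sum_{x\le z}m(x,z)\,a(x)\,\frac{t^{d(x,z)}}{d(x,z)!},\qquad Q_t(z)=\frac{1}{m(z)}\sum_{y\ge z}m(z,y)\,b(y)\,\frac{(1-t)^{d(z,y)}}{d(z,y)!}.$$
   Context: $G$ is a connected, locally finite graph with graph distance $d$; geodesics are paths of adjacent vertices $\gamma(0),\dots,\gamma(n)$ with $n=d(\gamma(0),\gamma(n))$, $e_0(\gamma)=\gamma(0)$, $e_1(\gamma)=\gamma(n)$. For finitely supported probability distributions $f_0,f_1$: $\Pi_1(f_0,f_1)$ = couplings minimizing $\sum d(x,y)\pi(x,y)$ (minimum $W_1$), $\mathcal{C}(f_0,f_1)=\{(x,y):\pi(x,y)>0$ for some $\pi\in\Pi_1\}$; $W_1$-orientation: adjacent $x,y$ get $x\to y$ iff some geodesic $\gamma$ with $(e_0(\gamma),e_1(\gamma))\in\mathcal{C}(f_0,f_1)$ has $\gamma(k)=x,\gamma(k+1)=y$. Oriented paths: $\gamma(i)\to\gamma(i+1)$; $x\le y$ iff an oriented path (possibly of length $0$) goes from $x$ to $y$; $\gamma_i=\gamma(i)$. $E(G)=\{(xy):x\to y\}$, $T(G)$ triples $x_0\to x_1\to x_2$, $\mathcal{F}(x)=\{y:x\to y\}$, $\mathcal{E}(x)=\{y:y\to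 x\}$; $\nabla g(x_1)=\sum_{\mathcal{F}(x_1)}g(x_1x_2)-\sum_{\mathcal{E}(x_1)}g(x_0x_1)$, $\nabla h(x_1x_2)=\sum_{x_3\in\mathcal{F}(x_2)}h(x_1x_2x_3)-\sum_{x_0\in\mathcal{E}(x_1)}h(x_0x_1x_2)$. $W_{1,+}$-geodesic: a family $(f_t)_{t\in[0,1]}$ from $f_0$ to $f_1$ with $W_1(f_s,f_t)=|t-s|W_1(f_0,f_1)$, differentiable in $t$, with $g_t$ on $E(G)$, $h_t$ on $T(G)$, $\partial_tf_t=-\nabla g_t$, $\partial_tg_t=-\nabla h_t$, $g_t>0$, $f_t(x_1)h_t(x_0x_1x_2)=g_t(x_0x_1)g_t(x_1x_2)$. $C_\gamma(t)=f_t(\gamma_0)$ if $L(\gamma)=0$, $g_t(\gamma_0\gamma_1)$ if $L(\gamma)=1$, $\prod_{i=0}^{n-1}g_t(\gamma_i\gamma_{i+1})/\prod_{j=1}^{n-1}f_t(\gamma_j)$ if $n\ge2$. $\mathcal{A}=\{x:\mathcal{E}(x)=\emptyset\}$, $\mathcal{B}=\{x:\mathcal{F}(x)=\emptyset\}$; extremal oriented paths start in $\mathcal{A}$, end in $\mathcal{B}$; $\mathrm{SE}\Gamma_{1,x}$: oriented paths from a vertex of $\mathcal{A}$ to $x$; $\mathrm{SE}\Gamma_{2,x}$: oriented paths from $x$ to a vertex of $\mathcal{B}$. For $z_1\le\cdots\le z_p$, $m(z_1,\dots,z_p)=\sum_\gamma C_\gamma(0)$ over extremal oriented paths $\gamma$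 with indices $k_1\le\dots\le k_p$, $\gamma(k_i)=z_i$ (for extremal $\gamma$, $C_\gamma(t)$ is independent of $t$). $P_t(x)=\frac{1}{m(x)}\sum_{\gamma\in\mathrm{SE}\Gamma_{2,x}}C_\gamma(t)$, $Q_t(x)=\frac{1}{m(x)}\sum_{\gamma\in\mathrm{SE}\Gamma_{1,x}}C_\gamma(t)$. *)

theory Defs
  imports "HOL-Analysis.Analysis"
begin

(* A path along a relation R: a nonempty vertex list with consecutive vertices related.
   gamma(i) = gamma ! i, the length L(gamma) is length gamma - 1. *)
definition path_in :: "('v \<Rightarrow> 'v \<Rightarrow> bool) \<Rightarrow> 'v list \<Rightarrow> bool" where
  "path_in R \<gamma> \<longleftrightarrow> \<gamma> \<noteq> [] \<and> (\<forall>i. Suc i < length \<gamma> \<longrightarrow> R (\<gamma> ! i) (\<gamma> ! Suc i))"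

definition gdist :: "('v \<Rightarrow> 'v \<Rightarrow> bool) \<Rightarrow> 'v \<Rightarrow> 'v \<Rightarrow> nat" where
  "gdist adj x y = (LEAST n. \<exists>\<gamma>. path_in adj \<gamma> \<and> hd \<gamma> = x \<and> last \<gamma> = y \<and> length \<gamma> = Suc n)"

definition geodesic :: "('v \<Rightarrow> 'v \<Rightarrow> bool) \<Rightarrow> 'v list \<Rightarrow> bool" where
  "geodesic adj \<gamma> \<longleftrightarrow> path_in adj \<gamma> \<and> length \<gamma> = Suc (gdist adj (hd \<gamma>) (last \<gamma>))"

definition prob_dist :: "('v \<Rightarrow> real) \<Rightarrow> bool" where
  "prob_dist f \<longleftrightarrow> (\<forall>x. f x \<ge> 0) \<and> finite {x. f x \<noteq> 0} \<and> (\<Sum>x\<in>{x. f x \<noteq> 0}. f x) = 1"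

definition coupling :: "('v \<Rightarrow> real) \<Rightarrow> ('v \<Rightarrow> real) \<Rightarrow> ('v \<Rightarrow> 'v \<Rightarrow> real) \<Rightarrow> bool" where
  "coupling f0 f1 \<pi> \<longleftrightarrow> (\<forall>x y. \<pi> x y \<ge> 0) \<and> finite {(x,y). \<pi> x y \<noteq> 0}
     \<and> (\<forall>x. (\<Sum>y\<in>{y. \<pi> x y \<noteq> 0}. \<pi> x y) = f0 x)
     \<and> (\<forall>y. (\<Sum>x\<in>{x. \<pi> x y \<noteq> 0}. \<pi> x y) = f1 y)"

definition transport_cost :: "('v \<Rightarrow> 'v \<Rightarrow> bool) \<Rightarrow> ('v \<Rightarrow> 'v \<Rightarrow> real) \<Rightarrow> real" where
  "transport_cost adj \<pi> = (\<Sum>(x,y)\<in>{(x,y). \<pi> x y \<noteq> 0}. real (gdist adj x y) * \<pi> x y)"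

definition W1 :: "('v \<Rightarrow> 'v \<Rightarrow> bool) \<Rightarrow> ('v \<Rightarrow> real) \<Rightarrow> ('v \<Rightarrow> real) \<Rightarrow> real" where
  "W1 adj f0 f1 = Inf (transport_cost adj ` {\<pi>. coupling f0 f1 \<pi>})"

definition opt_couplings :: "('v \<Rightarrow> 'v \<Rightarrow> bool) \<Rightarrow> ('v \<Rightarrow> real) \<Rightarrow> ('v \<Rightarrow> real) \<Rightarrow> ('v \<Rightarrow> 'v \<Rightarrow> real) set" where
  "opt_couplings adj f0 f1 = {\<pi>. coupling f0 f1 \<pi> \<and> transport_cost adj \<pi> = W1 adj f0 f1}"

definition Cset :: "('v \<Rightarrow> 'v \<Rightarrow> bool) \<Rightarrow> ('v \<Rightarrow> real) \<Rightarrow> ('v \<Rightarrow> real) \<Rightarrow> ('v \<times> 'v) set" where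
  "Cset adj f0 f1 = {(x,y). \<exists>\<pi>\<in>opt_couplings adj f0 f1. \<pi> x y > 0}"

definition orient :: "('v \<Rightarrow> 'v \<Rightarrow> bool) \<Rightarrow> ('v \<Rightarrow> real) \<Rightarrow> ('v \<Rightarrow> real) \<Rightarrow> 'v \<Rightarrow> 'v \<Rightarrow> bool" where
  "orient adj f0 f1 x y \<longleftrightarrow> adj x y \<and>
     (\<exists>\<gamma> k. geodesic adj \<gamma> \<and> (hd \<gamma>, last \<gamma>) \<in> Cset adj f0 f1 \<and> Suc k < length \<gamma>
            \<and> \<gamma> ! k = x \<and> \<gamma> ! Suc k = y)"

(* x \<le> y : an oriented path (possibly of length 0) from x to y *)
definition oleq :: "('v \<Rightarrow> 'v \<Rightarrow> bool) \<Rightarrow> 'v \<Rightarrow> 'v \<Rightarrow> bool" where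
  "oleq arr x y \<longleftrightarrow> (\<exists>\<gamma>. path_in arr \<gamma> \<and> hd \<gamma> = x \<and> last \<gamma> = y)"

definition fwd :: "('v \<Rightarrow> 'v \<Rightarrow> bool) \<Rightarrow> 'v \<Rightarrow> 'v set" where
  "fwd arr x = {y. arr x y}"

definition bwd :: "('v \<Rightarrow> 'v \<Rightarrow> bool) \<Rightarrow> 'v \<Rightarrow> 'v set" where
  "bwd arr x = {y. arr y x}"

definition div_g :: "('v \<Rightarrow> 'v \<Rightarrow> bool) \<Rightarrow> ('v \<Rightarrow> 'v \<Rightarrow> real) \<Rightarrow> 'v \<Rightarrow> real" where
  "div_g arr g x1 = (\<Sum>x2\<in>fwd arr x1. g x1 x2) - (\<Sum>x0\<in>bwd arr x1. g x0 x1)"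

definition div_h :: "('v \<Rightarrow> 'v \<Rightarrow> bool) \<Rightarrow> ('v \<Rightarrow> 'v \<Rightarrow> 'v \<Rightarrow> real) \<Rightarrow> 'v \<Rightarrow> 'v \<Rightarrow> real" where
  "div_h arr h x1 x2 = (\<Sum>x3\<in>fwd arr x2. h x1 x2 x3) - (\<Sum>x0\<in>bwd arr x1. h x0 x1 x2)"

definition W1plus_geodesic :: "('v \<Rightarrow> 'v \<Rightarrow> bool) \<Rightarrow> (real \<Rightarrow> 'v \<Rightarrow> real)
    \<Rightarrow> (real \<Rightarrow> 'v \<Rightarrow> 'v \<Rightarrow> real) \<Rightarrow> (real \<Rightarrow> 'v \<Rightarrow> 'v \<Rightarrow> 'v \<Rightarrow> real) \<Rightarrow> bool" where
  "W1plus_geodesic adj f g h \<longleftrightarrow>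
    (let arr = orient adj (f 0) (f 1) in
     (\<forall>t\<in>{0..1}. prob_dist (f t)) \<and>
     (\<forall>s\<in>{0..1}. \<forall>t\<in>{0..1}. W1 adj (f s) (f t) = \<bar>t - s\<bar> * W1 adj (f 0) (f 1)) \<and>
     (\<forall>x. \<forall>t\<in>{0..1}. ((\<lambda>s. f s x) has_real_derivative (- div_g arr (g t) x)) (at t within {0..1})) \<and>
     (\<forall>x1 x2. arr x1 x2 \<longrightarrow> (\<forall>t\<in>{0..1}.
        ((\<lambda>s. g s x1 x2) has_real_derivative (- div_h arr (h t) x1 x2)) (at t within {0..1}))) \<and>
     (\<forall>x1 x2. arr x1 x2 \<longrightarrow> (\<forall>t\<in>{0..1}. g t x1 x2 > 0)) \<and>
     (\<forall>x0 x1 x2. arr x0 x1 \<longrightarrow> arr x1 x2 \<longrightarrow> (\<forall>t\<in>{0..1}.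
        f t x1 * h t x0 x1 x2 = g t x0 x1 * g t x1 x2)))"

definition Cpath :: "(real \<Rightarrow> 'v \<Rightarrow> real) \<Rightarrow> (real \<Rightarrow> 'v \<Rightarrow> 'v \<Rightarrow> real) \<Rightarrow> real \<Rightarrow> 'v list \<Rightarrow> real" where
  "Cpath f g t \<gamma> = (let n = length \<gamma> - 1 in
     if n = 0 then f t (\<gamma> ! 0)
     else if n = 1 then g t (\<gamma> ! 0) (\<gamma> ! 1)
     else (\<Prod>i<n. g t (\<gamma> ! i) (\<gamma> ! Suc i)) / (\<Prod>j\<in>{1..n-1}. f t (\<gamma> ! j)))"

definition Aset :: "('v \<Rightarrow> 'v \<Rightarrow> bool) \<Rightarrow> 'v set" where
  "Aset arr = {x. bwd arr x = {}}"

definition Bset :: "('v \<Rightarrow> 'v \<Rightarrow> bool) \<Rightarrow> 'v set" where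
  "Bset arr = {x. fwd arr x = {}}"

definition extremal :: "('v \<Rightarrow> 'v \<Rightarrow> bool) \<Rightarrow> 'v list \<Rightarrow> bool" where
  "extremal arr \<gamma> \<longleftrightarrow> path_in arr \<gamma> \<and> hd \<gamma> \<in> Aset arr \<and> last \<gamma> \<in> Bset arr"

definition mval :: "('v \<Rightarrow> 'v \<Rightarrow> bool) \<Rightarrow> (real \<Rightarrow> 'v \<Rightarrow> real) \<Rightarrow> (real \<Rightarrow> 'v \<Rightarrow> 'v \<Rightarrow> real) \<Rightarrow> 'v list \<Rightarrow> real" where
  "mval arr f g zs = (\<Sum>\<gamma>\<in>{\<gamma>. extremal arr \<gamma> \<and>
      (\<exists>ks. length ks = length zs \<and> sorted ks \<and>
         (\<forall>i<length zs. ks ! i < length \<gamma> \<and> \<gamma> ! (ks ! i) = zs ! i))}. Cpath f g 0 \<gamma>)"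

definition Pt :: "('v \<Rightarrow> 'v \<Rightarrow> bool) \<Rightarrow> (real \<Rightarrow> 'v \<Rightarrow> real) \<Rightarrow> (real \<Rightarrow> 'v \<Rightarrow> 'v \<Rightarrow> real) \<Rightarrow> real \<Rightarrow> 'v \<Rightarrow> real" where
  "Pt arr f g t x = (1 / mval arr f g [x]) *
     (\<Sum>\<gamma>\<in>{\<gamma>. path_in arr \<gamma> \<and> hd \<gamma> = x \<and> last \<gamma> \<in> Bset arr}. Cpath f g t \<gamma>)"

definition Qt :: "('v \<Rightarrow> 'v \<Rightarrow> bool) \<Rightarrow> (real \<Rightarrow> 'v \<Rightarrow> real) \<Rightarrow> (real \<Rightarrow> 'v \<Rightarrow> 'v \<Rightarrow> real) \<Rightarrow> real \<Rightarrow> 'v \<Rightarrow> real" where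
  "Qt arr f g t x = (1 / mval arr f g [x]) *
     (\<Sum>\<gamma>\<in>{\<gamma>. path_in arr \<gamma> \<and> hd \<gamma> \<in> Aset arr \<and> last \<gamma> = x}. Cpath f g t \<gamma>)"

end

theory Submission
  imports Defs
begin


lemma path_in_single[simp]: "path_in R [x]"
  by (simp add: path_in_def)

lemma path_in_Nil[simp]: "\<not> path_in R []"
  by (simp add: path_in_def)

lemma path_in_Cons2[simp]: "path_in R (x # y # r) \<longleftrightarrow> R x y \<and> path_in R (y # r)"
  unfolding path_in_def
  by (auto simp: nth_Cons split: nat.splits)

lemma path_in_Cons: "path_in R (x # g) \<longleftrightarrow> g = [] \<or> (R x (hd g) \<and> path_in R g)"
  by (cases g) auto

lemma path_in_nonempty: "path_in R g \<Longrightarrow> g \<noteq> []"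
  by (simp add: path_in_def)

lemma path_in_append: "path_in R a \<Longrightarrow> path_in R b \<Longrightarrow> last a = hd b \<Longrightarrow> path_in R (a @ tl b)"
proof (induction a)
  case Nil thus ?case by simp
next
  case (Cons x a)
  show ?case
  proof (cases a)
    case Nil
    with Cons show ?thesis by (cases b) auto
  next
    case (Cons y a')
    with Cons.prems Cons.IH show ?thesis by (auto simp: path_in_Cons)
  qed
qed

lemma path_in_appendD1: "path_in R (a @ b) \<Longrightarrow> a \<noteq> [] \<Longrightarrow> path_in R a"
  unfolding path_in_def apply (auto simp: nth_append)
  subgoal for i by (drule spec[of _ i]) auto
  done

lemma path_in_appendD2: "path_in R (a @ b) \<Longrightarrow> b \<noteq> [] \<Longrightarrow> path_in R b"
  unfolding path_in_def
  apply auto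
  by (metis add_Suc_right add_less_cancel_left nth_append_length_plus)

lemma path_in_snoc: "path_in R (a @ [y]) \<longleftrightarrow> a = [] \<or> (path_in R a \<and> R (last a) y)"
proof (induction a)
  case Nil thus ?case by simp
next
  case (Cons x a)
  thus ?case by (cases a) auto
qed

lemma path_in_take: "path_in R g \<Longrightarrow> 0 < k \<Longrightarrow> path_in R (take k g)"
  unfolding path_in_def by auto

lemma path_in_drop: "path_in R g \<Longrightarrow> k < length g \<Longrightarrow> path_in R (drop k g)"
  unfolding path_in_def by auto

lemma path_in_rev: "path_in R (rev g) \<longleftrightarrow> path_in (\<lambda>x y. R y x) g"
proof (induction g)
  case Nil thus ?case by simp
next
  case (Cons x g)
  thus ?case by (auto simp: path_in_snoc path_in_Cons last_rev)
qed

lemma path_in_mono: "path_in R g \<Longrightarrow> (\<And>x y. R x y \<Longrightarrow> S x y) \<Longrightarrow> path_in S g"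
  unfolding path_in_def by auto

lemma finite_paths_len:
  assumes fin: "\<And>x. finite {y. R x y}"
  shows "finite {g. path_in R g \<and> hd g = x \<and> length g \<le> n}"
proof (induction n arbitrary: x)
  case 0
  have "{g. path_in R g \<and> hd g = x \<and> length g \<le> 0} = {}" by (auto simp: path_in_def)
  thus ?case by simp
next
  case (Suc n)
  have "{g. path_in R g \<and> hd g = x \<and> length g \<le> Suc n} \<subseteq>
        {[x]} \<union> (\<Union>y\<in>{y. R x y}. (Cons x) ` {g. path_in R g \<and> hd g = y \<and> length g \<le> n})"
  proof
    fix g assume "g \<in> {g. path_in R g \<and> hd g = x \<and> length g \<le> Suc n}"
    hence g: "path_in R g" "hd g = x" "length g \<le> Suc n" by auto
    then obtain r where r: "g = x # r" by (cases g) (auto simp: path_in_def)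
    show "g \<in> {[x]} \<union> (\<Union>y\<in>{y. R x y}. (Cons x) ` {g. path_in R g \<and> hd g = y \<and> length g \<le> n})"
    proof (cases r)
      case Nil thus ?thesis using r by simp
    next
      case (Cons y r')
      thus ?thesis using r g by auto
    qed
  qed
  moreover have "finite ({[x]} \<union> (\<Union>y\<in>{y. R x y}. (Cons x) ` {g. path_in R g \<and> hd g = y \<and> length g \<le> n}))"
    using Suc fin by auto
  ultimately show ?case by (rule finite_subset)
qed


lemma Cpath_single[simp]: "Cpath f g t [x] = f t x"
  by (simp add: Cpath_def)

lemma Cpath_two[simp]: "Cpath f g t [x, y] = g t x y"
  by (simp add: Cpath_def)

lemma Cpath_ge2:
  assumes "length c \<ge> 2"
  shows "Cpath f g t c = (\<Prod>i<length c - 1. g t (c ! i) (c ! Suc i)) / (\<Prod>j\<in>{1..length c - 2}. f t (c ! j))"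
proof -
  consider "length c = 2" | "length c > 2" using assms by linarith
  thus ?thesis
  proof cases
    case 1
    then obtain x y where "c = [x, y]"
      by (metis One_nat_def Suc_1 length_0_conv length_Suc_conv)
    thus ?thesis by (simp add: Cpath_def lessThan_Suc)
  next
    case 2
    thus ?thesis by (simp add: Cpath_def Let_def numeral_2_eq_2)
  qed
qed

lemma prod_1_Suc_shift:
  "(\<Prod>j\<in>{1..Suc k}. F j) = F 1 * (\<Prod>j\<in>{1..k}. F (Suc j))"
proof -
  have "{1..Suc k} = insert 1 {Suc 1..Suc k}" by auto
  hence "(\<Prod>j\<in>{1..Suc k}. F j) = F 1 * (\<Prod>j\<in>{Suc 1..Suc k}. F j)" by simp
  also have "(\<Prod>j\<in>{Suc 1..Suc k}. F j) = (\<Prod>j\<in>{1..k}. F (Suc j))"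
    by (rule prod.shift_bounds_cl_Suc_ivl)
  finally show ?thesis .
qed

lemma Cpath_Cons3:
  "Cpath f g t (x # y # z # r) = g t x y * Cpath f g t (y # z # r) / f t y"
proof -
  have A: "Cpath f g t (x # y # z # r) =
    (\<Prod>i<Suc (Suc (length r)). g t ((x # y # z # r) ! i) ((x # y # z # r) ! Suc i)) /
    (\<Prod>j\<in>{1..Suc (length r)}. f t ((x # y # z # r) ! j))"
    by (subst Cpath_ge2) auto
  have B: "Cpath f g t (y # z # r) =
    (\<Prod>i<Suc (length r). g t ((y # z # r) ! i) ((y # z # r) ! Suc i)) /
    (\<Prod>j\<in>{1..length r}. f t ((y # z # r) ! j))"
    by (subst Cpath_ge2) auto
  show ?thesis
    unfolding A B prod.lessThan_Suc_shift prod_1_Suc_shift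
    by simp
qed

lemma Cpath_concat:
  assumes "a \<noteq> []" "b \<noteq> []" "last a = hd b"
    and nz: "length a \<ge> 2 \<Longrightarrow> length b \<ge> 2 \<Longrightarrow> f t (hd b) \<noteq> 0"
  shows "Cpath f g t (a @ tl b) * f t (hd b) = Cpath f g t a * Cpath f g t b"
  using assms
proof (induction a rule: induct_list012)
  case 1 thus ?case by simp
next
  case (2 x)
  thus ?case by (cases b) auto
next
  case (3 w v r)
  show ?case
  proof (cases r)
    case Nil
    hence v: "v = hd b" using 3 by simp
    obtain b' where b: "b = v # b'" using 3(4) v by (cases b) auto
    show ?thesis
    proof (cases b')
      case Nil thus ?thesis using b Nil by simp
    next
      case (Cons u b'')
      have "f t (hd b) \<noteq> 0" by (rule 3(6)) (use b Cons Nil in auto)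
      hence "f t v \<noteq> 0" using v by simp
      thus ?thesis using b Cons Nil by (simp add: Cpath_Cons3)
    qed
  next
    case (Cons u r')
    have IH: "Cpath f g t ((v # r) @ tl b) * f t (hd b) = Cpath f g t (v # r) * Cpath f g t b"
    proof (rule 3(2))
      show "last (v # r) = hd b" using 3(5) by simp
      show "f t (hd b) \<noteq> 0" if "2 \<le> length (v # r)" "2 \<le> length b"
        using 3(6) that by simp
    qed (use 3(4) in auto)
    have e1: "(w # v # r) @ tl b = w # v # u # (r' @ tl b)" using Cons by simp
    have e2: "(v # r) @ tl b = v # u # (r' @ tl b)" using Cons by simp
    show ?thesis unfolding e1 using IH unfolding e2 Cons
      by (simp add: Cpath_Cons3)
  qed
qed

lemma Cpath_rev:
  assumes "\<And>x. F2 t x = F s x" "\<And>x y. G2 t x y = G s y x"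
  shows "Cpath F2 G2 t (rev c) = Cpath F G s c"
proof -
  consider "length c = 0" | "length c = 1" | "length c \<ge> 2" by linarith
  thus ?thesis
  proof cases
    case 1 thus ?thesis using assms by (simp add: Cpath_def)
  next
    case 2
    then obtain x where "c = [x]" by (metis One_nat_def length_0_conv length_Suc_conv)
    thus ?thesis using assms by simp
  next
    case 3
    define n where "n = length c - 1"
    have n: "length c = Suc n" "n \<ge> 1" using 3 n_def by auto
    have L: "Cpath F2 G2 t (rev c) = (\<Prod>i<n. G s (c ! (n - Suc i)) (c ! (n - i))) /
        (\<Prod>j\<in>{1..n - 1}. F s (c ! (n - j)))"
    proof -
      have "Cpath F2 G2 t (rev c) = (\<Prod>i<n. G2 t (rev c ! i) (rev c ! Suc i)) /
        (\<Prod>j\<in>{1..n - 1}. F2 t (rev c ! j))"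
        using 3 n by (subst Cpath_ge2) auto
      also have "(\<Prod>i<n. G2 t (rev c ! i) (rev c ! Suc i)) = (\<Prod>i<n. G s (c ! (n - Suc i)) (c ! (n - i)))"
        by (rule prod.cong) (use n assms in \<open>auto simp: rev_nth Suc_diff_Suc\<close>)
      also have "(\<Prod>j\<in>{1..n - 1}. F2 t (rev c ! j)) = (\<Prod>j\<in>{1..n - 1}. F s (c ! (n - j)))"
        by (rule prod.cong) (use n assms in \<open>auto simp: rev_nth\<close>)
      finally show ?thesis .
    qed
    have R: "Cpath F G s c = (\<Prod>i<n. G s (c ! i) (c ! Suc i)) / (\<Prod>j\<in>{1..n - 1}. F s (c ! j))"
      using 3 n by (subst Cpath_ge2) auto
    have P1: "(\<Prod>i<n. G s (c ! (n - Suc i)) (c ! (n - i))) = (\<Prod>i<n. G s (c ! i) (c ! Suc i))"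
    proof -
      have "(\<Prod>i<n. G s (c ! i) (c ! Suc i)) = (\<Prod>i<n. G s (c ! (n - Suc i)) (c ! Suc (n - Suc i)))"
        using prod.atLeastLessThan_rev[of "\<lambda>i. G s (c ! i) (c ! Suc i)" 0 n] by (simp add: atLeast0LessThan)
      also have "\<dots> = (\<Prod>i<n. G s (c ! (n - Suc i)) (c ! (n - i)))"
        by (rule prod.cong) (auto simp: Suc_diff_Suc)
      finally show ?thesis by simp
    qed
    have P2: "(\<Prod>j\<in>{1..n - 1}. F s (c ! (n - j))) = (\<Prod>j\<in>{1..n - 1}. F s (c ! j))"
    proof -
      have "(\<Prod>j\<in>{1..n - 1}. F s (c ! (n - j))) = (\<Prod>j\<in>{1..n - 1}. F s (c ! (n - (n - 1 + 1 - j))))"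
        by (rule prod.atLeastAtMost_rev)
      also have "\<dots> = (\<Prod>j\<in>{1..n - 1}. F s (c ! j))"
        by (rule prod.cong) (use n in auto)
      finally show ?thesis .
    qed
    show ?thesis using L R P1 P2 by simp
  qed
qed


locale geo =
  fixes r :: "'v \<Rightarrow> 'v \<Rightarrow> bool" and F :: "real \<Rightarrow> 'v \<Rightarrow> real"
    and G :: "real \<Rightarrow> 'v \<Rightarrow> 'v \<Rightarrow> real" and H :: "real \<Rightarrow> 'v \<Rightarrow> 'v \<Rightarrow> 'v \<Rightarrow> real"
    and dist :: "'v \<Rightarrow> 'v \<Rightarrow> nat" and N :: nat
  assumes fin_f: "\<And>x. finite {y. r x y}" and fin_b: "\<And>x. finite {y. r y x}"
    and plen: "\<And>c. path_in r c \<Longrightarrow> length c = Suc (dist (hd c) (last c))"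
    and bound: "\<And>c. path_in r c \<Longrightarrow> length c \<le> N"
    and dF: "\<And>x t. t \<in> {0..1} \<Longrightarrow> ((\<lambda>s. F s x) has_real_derivative (- div_g r (G t) x)) (at t within {0..1})"
    and dG: "\<And>x1 x2 t. r x1 x2 \<Longrightarrow> t \<in> {0..1} \<Longrightarrow>
        ((\<lambda>s. G s x1 x2) has_real_derivative (- div_h r (H t) x1 x2)) (at t within {0..1})"
    and gpos: "\<And>x1 x2 t. r x1 x2 \<Longrightarrow> t \<in> {0..1} \<Longrightarrow> G t x1 x2 > 0"
    and fh: "\<And>x0 x1 x2 t. r x0 x1 \<Longrightarrow> r x1 x2 \<Longrightarrow> t \<in> {0..1} \<Longrightarrow>
        F t x1 * H t x0 x1 x2 = G t x0 x1 * G t x1 x2"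
    and fnn: "\<And>x t. t \<in> {0..1} \<Longrightarrow> F t x \<ge> 0"
begin

abbreviation "C t c \<equiv> Cpath F G t c"

lemma fpos: "r x0 x1 \<Longrightarrow> r x1 x2 \<Longrightarrow> t \<in> {0..1} \<Longrightarrow> F t x1 > 0"
proof -
  assume a: "r x0 x1" "r x1 x2" "t \<in> {0..1}"
  have "F t x1 * H t x0 x1 x2 > 0" using fh[OF a] gpos a by simp
  hence "F t x1 \<noteq> 0" by auto
  thus ?thesis using fnn[OF a(3), of x1] by linarith
qed

lemma Hval: "r x0 x1 \<Longrightarrow> r x1 x2 \<Longrightarrow> t \<in> {0..1} \<Longrightarrow> H t x0 x1 x2 = G t x0 x1 * G t x1 x2 / F t x1"
  using fh fpos by (metis less_irrefl nonzero_eq_divide_eq mult.commute)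

definition In :: "real \<Rightarrow> 'v list \<Rightarrow> real" where
  "In t c = (\<Sum>w\<in>{w. r w (hd c)}. C t (w # c))"
definition Out :: "real \<Rightarrow> 'v list \<Rightarrow> real" where
  "Out t c = (\<Sum>u\<in>{u. r (last c) u}. C t (c @ [u]))"

lemma dC: "path_in r c \<Longrightarrow> t \<in> {0..1} \<Longrightarrow>
   ((\<lambda>s. C s c) has_real_derivative (In t c - Out t c)) (at t within {0..1})"
proof (induction c rule: induct_list012)
  case 1 thus ?case by simp
next
  case (2 x)
  have "- div_g r (G t) x = In t [x] - Out t [x]"
    unfolding div_g_def In_def Out_def fwd_def bwd_def by simp
  thus ?case using dF[OF 2(2), of x] by simp
next
  case (3 x y zs)
  show ?case
  proof (cases zs)
    case Nil
    have rxy: "r x y" using 3(3) Nil by simp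
    have "- div_h r (H t) x y = In t [x, y] - Out t [x, y]"
    proof -
      have "(\<Sum>w\<in>{w. r w x}. H t w x y) = (\<Sum>w\<in>{w. r w x}. C t [w, x, y])"
        by (rule sum.cong) (use rxy 3(4) in \<open>auto simp: Hval Cpath_Cons3\<close>)
      moreover have "(\<Sum>u\<in>{u. r y u}. H t x y u) = (\<Sum>u\<in>{u. r y u}. C t [x, y, u])"
        by (rule sum.cong) (use rxy 3(4) in \<open>auto simp: Hval Cpath_Cons3\<close>)
      ultimately show ?thesis
        unfolding div_h_def In_def Out_def fwd_def bwd_def using Nil by simp
    qed
    thus ?thesis using dG[OF rxy 3(4)] Nil by simp
  next
    case (Cons z r')
    have rxy: "r x y" and p: "path_in r (y # zs)" using 3(3) by auto
    have ryz: "r y z" using p Cons by simp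
    have fy: "F t y > 0" using fpos[OF rxy ryz 3(4)] .
    have IH: "((\<lambda>s. C s (y # zs)) has_real_derivative (In t (y # zs) - Out t (y # zs))) (at t within {0..1})"
      using 3(2)[OF p 3(4)] .
    have fe: "(\<lambda>s. C s (x # y # zs)) = (\<lambda>s. G s x y * C s (y # zs) / F s y)"
      unfolding Cons by (simp add: Cpath_Cons3)
    have d: "((\<lambda>s. C s (x # y # zs)) has_real_derivative
        ((- div_h r (H t) x y * C t (y # zs) + (In t (y # zs) - Out t (y # zs)) * G t x y) * F t y
         - G t x y * C t (y # zs) * (- div_g r (G t) y)) / (F t y * F t y)) (at t within {0..1})"
      unfolding fe
      by (intro DERIV_divide DERIV_mult dG[OF rxy 3(4)] IH dF[OF 3(4)]) (use fy in auto)
    define gxy where "gxy = G t x y"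
    define fy' where "fy' = F t y"
    define Cc where "Cc = C t (y # zs)"
    define SI where "SI = (\<Sum>u\<in>{u. r u y}. G t u y)"
    define SO where "SO = (\<Sum>u\<in>{u. r y u}. G t y u)"
    define Bx where "Bx = (\<Sum>w\<in>{w. r w x}. G t w x * gxy / F t x)"
    define OC where "OC = Out t (y # zs)"
    have e1: "- div_h r (H t) x y = Bx - gxy * SO / fy'"
    proof -
      have "(\<Sum>w\<in>{w. r w x}. H t w x y) = Bx"
        unfolding Bx_def gxy_def by (rule sum.cong) (use rxy 3(4) in \<open>auto simp: Hval Cpath_Cons3\<close>)
      moreover have "(\<Sum>u\<in>{u. r y u}. H t x y u) = gxy * SO / fy'"
        unfolding SO_def gxy_def fy'_def sum_distrib_left sum_divide_distrib
        by (rule sum.cong) (use rxy 3(4) in \<open>auto simp: Hval Cpath_Cons3\<close>)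
      ultimately show ?thesis unfolding div_h_def fwd_def bwd_def by simp
    qed
    have e2: "In t (y # zs) = SI * Cc / fy'"
      unfolding In_def SI_def Cc_def fy'_def sum_distrib_right sum_divide_distrib
      by (rule sum.cong) (auto simp: Cons Cpath_Cons3)
    have e3: "- div_g r (G t) y = SI - SO"
      unfolding div_g_def SI_def SO_def fwd_def bwd_def by simp
    have e4: "In t (x # y # zs) = Bx * Cc / fy'"
      unfolding In_def Bx_def Cc_def fy'_def gxy_def sum_distrib_right sum_divide_distrib
      by (rule sum.cong) (auto simp: Cons Cpath_Cons3 ac_simps)
    have e5: "Out t (x # y # zs) = gxy * OC / fy'"
      unfolding Out_def OC_def gxy_def fy'_def sum_distrib_left sum_divide_distrib
      by (rule sum.cong) (auto simp: Cons Cpath_Cons3)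
    have fy0: "fy' \<noteq> 0" using fy fy'_def by simp
    have eq: "((- div_h r (H t) x y * C t (y # zs) + (In t (y # zs) - Out t (y # zs)) * G t x y) * F t y
         - G t x y * C t (y # zs) * (- div_g r (G t) y)) / (F t y * F t y)
         = In t (x # y # zs) - Out t (x # y # zs)"
      unfolding e1 e2 e3 e4 e5 OC_def[symmetric] gxy_def[symmetric] fy'_def[symmetric] Cc_def[symmetric]
      using fy0 by (simp add: field_simps)
    show ?thesis using d unfolding eq .
  qed
qed

end


lemma Back_decomp:
  "{c. path_in R c \<and> last c = x} =
   insert [x] (\<Union>w\<in>{w. R w x}. (\<lambda>c. c @ [x]) ` {c. path_in R c \<and> last c = w})"
proof (rule set_eqI, rule iffI)
  fix c assume "c \<in> {c. path_in R c \<and> last c = x}"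
  hence c: "path_in R c" "last c = x" by auto
  have ne: "c \<noteq> []" using c path_in_nonempty by auto
  have ce: "c = butlast c @ [x]" using ne c by (metis append_butlast_last_id)
  show "c \<in> insert [x] (\<Union>w\<in>{w. R w x}. (\<lambda>c. c @ [x]) ` {c. path_in R c \<and> last c = w})"
  proof (cases "butlast c = []")
    case True thus ?thesis using ce by auto
  next
    case False
    have "path_in R (butlast c) \<and> R (last (butlast c)) x"
      using c(1) False ce path_in_snoc[of R "butlast c" x] by auto
    thus ?thesis using ce False by blast
  qed
next
  fix c assume "c \<in> insert [x] (\<Union>w\<in>{w. R w x}. (\<lambda>c. c @ [x]) ` {c. path_in R c \<and> last c = w})"
  thus "c \<in> {c. path_in R c \<and> last c = x}"
    by (auto simp: path_in_snoc)
qed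

context geo
begin

definition SE2 :: "'v \<Rightarrow> 'v list set" where
  "SE2 x = {c. path_in r c \<and> hd c = x \<and> last c \<in> Bset r}"
definition SE1 :: "'v \<Rightarrow> 'v list set" where
  "SE1 x = {c. path_in r c \<and> hd c \<in> Aset r \<and> last c = x}"
definition Back :: "'v \<Rightarrow> 'v list set" where
  "Back x = {c. path_in r c \<and> last c = x}"
definition Fw :: "'v \<Rightarrow> 'v list set" where
  "Fw x = {c. path_in r c \<and> hd c = x}"

lemma finite_Fw: "finite (Fw x)"
proof -
  have "Fw x \<subseteq> {c. path_in r c \<and> hd c = x \<and> length c \<le> N}"
    unfolding Fw_def using bound by auto
  thus ?thesis using finite_paths_len[of r x N] fin_f finite_subset by blast
qed

lemma finite_Back: "finite (Back x)"
proof -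
  have "Back x \<subseteq> rev ` {c. path_in (\<lambda>a b. r b a) c \<and> hd c = x \<and> length c \<le> N}"
  proof
    fix c assume "c \<in> Back x"
    hence c: "path_in r c" "last c = x" unfolding Back_def by auto
    have "rev c \<in> {c. path_in (\<lambda>a b. r b a) c \<and> hd c = x \<and> length c \<le> N}"
      using c bound[OF c(1)] path_in_rev[of r "rev c"] path_in_nonempty[OF c(1)]
      by (auto simp: hd_rev)
    thus "c \<in> rev ` {c. path_in (\<lambda>a b. r b a) c \<and> hd c = x \<and> length c \<le> N}"
      by (metis rev_rev_ident image_eqI)
  qed
  moreover have "finite {c. path_in (\<lambda>a b. r b a) c \<and> hd c = x \<and> length c \<le> N}"
    using finite_paths_len[of "\<lambda>a b. r b a" x N] fin_b by auto
  ultimately show ?thesis using finite_subset by blast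
qed

lemma finite_SE2: "finite (SE2 x)"
  by (rule finite_subset[OF _ finite_Fw[of x]]) (auto simp: SE2_def Fw_def)

lemma finite_SE1: "finite (SE1 x)"
  by (rule finite_subset[OF _ finite_Back[of x]]) (auto simp: SE1_def Back_def)

definition S :: "'v list \<Rightarrow> real \<Rightarrow> real" where
  "S p t = (\<Sum>b\<in>SE2 (last p). C t (p @ tl b))"

lemma dS:
  assumes p: "path_in r p" and t: "t \<in> {0..1}"
  shows "((\<lambda>s. S p s) has_real_derivative (\<Sum>w\<in>{w. r w (hd p)}. S (w # p) t)) (at t within {0..1})"
proof -
  have ne: "p \<noteq> []" using p path_in_nonempty by auto
  have "((\<lambda>s. S p s) has_real_derivative (\<Sum>b\<in>SE2 (last p). In t (p @ tl b) - Out t (p @ tl b))) (at t within {0..1})"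
    unfolding S_def
  proof (rule DERIV_sum)
    fix b assume "b \<in> SE2 (last p)"
    hence b: "path_in r b" "hd b = last p" unfolding SE2_def by auto
    show "((\<lambda>s. C s (p @ tl b)) has_real_derivative In t (p @ tl b) - Out t (p @ tl b)) (at t within {0..1})"
      by (rule dC[OF path_in_append[OF p b(1)] t]) (use b in simp)
  qed
  moreover have "(\<Sum>b\<in>SE2 (last p). In t (p @ tl b) - Out t (p @ tl b)) = (\<Sum>w\<in>{w. r w (hd p)}. S (w # p) t)"
  proof -
    have "(\<Sum>b\<in>SE2 (last p). In t (p @ tl b) - Out t (p @ tl b)) =
          (\<Sum>b\<in>SE2 (last p). \<Sum>w\<in>{w. r w (hd p)}. C t (w # p @ tl b))"
    proof (rule sum.cong)
      fix b assume "b \<in> SE2 (last p)"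
      hence b: "path_in r b" "hd b = last p" "last b \<in> Bset r" unfolding SE2_def by auto
      have lst: "last (p @ tl b) = last b"
        using b ne path_in_nonempty[OF b(1)] by (cases b) auto
      have "{u. r (last b) u} = {}" using b(3) by (simp add: Bset_def fwd_def)
      hence "Out t (p @ tl b) = 0" by (simp only: Out_def lst sum.empty)
      moreover have "In t (p @ tl b) = (\<Sum>w\<in>{w. r w (hd p)}. C t (w # p @ tl b))"
        unfolding In_def using ne by simp
      ultimately show "In t (p @ tl b) - Out t (p @ tl b) = (\<Sum>w\<in>{w. r w (hd p)}. C t (w # p @ tl b))"
        by simp
    qed simp
    also have "\<dots> = (\<Sum>w\<in>{w. r w (hd p)}. S (w # p) t)"
      unfolding S_def using ne by (subst sum.swap) simp
    finally show ?thesis .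
  qed
  ultimately show ?thesis by simp
qed

definition R :: "'v list \<Rightarrow> real \<Rightarrow> real" where
  "R p t = (\<Sum>q\<in>Back (hd p). S (butlast q @ p) 0 * t ^ (length q - 1) / fact (length q - 1))"

lemma R_decomp:
  assumes ne: "p \<noteq> []"
  shows "R p t = S p 0 + (\<Sum>w\<in>{w. r w (hd p)}. \<Sum>q\<in>Back w. S (q @ p) 0 * t ^ length q / fact (length q))"
proof -
  let ?x = "hd p"
  let ?A = "\<lambda>w. (\<lambda>c. c @ [?x]) ` Back w"
  let ?f = "\<lambda>q. S (butlast q @ p) 0 * t ^ (length q - 1) / fact (length q - 1)"
  have BD: "Back ?x = insert [?x] (\<Union>w\<in>{w. r w ?x}. ?A w)"
    unfolding Back_def by (rule Back_decomp)
  have fin: "finite (\<Union>w\<in>{w. r w ?x}. ?A w)" using fin_b finite_Back by auto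
  have nin: "[?x] \<notin> (\<Union>w\<in>{w. r w ?x}. ?A w)"
    unfolding Back_def using path_in_nonempty by fastforce
  have "R p t = ?f [?x] + sum ?f (\<Union>w\<in>{w. r w ?x}. ?A w)"
    unfolding R_def BD using fin nin by simp
  also have "?f [?x] = S p 0" by simp
  also have "sum ?f (\<Union>w\<in>{w. r w ?x}. ?A w) = (\<Sum>w\<in>{w. r w ?x}. sum ?f (?A w))"
  proof (rule sum.UNION_disjoint)
    show "finite {w. r w ?x}" using fin_b .
    show "\<forall>i\<in>{w. r w ?x}. finite (?A i)" using finite_Back by auto
    show "\<forall>i\<in>{w. r w ?x}. \<forall>j\<in>{w. r w ?x}. i \<noteq> j \<longrightarrow> ?A i \<inter> ?A j = {}"
      unfolding Back_def by auto
  qed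
  also have "\<dots> = (\<Sum>w\<in>{w. r w ?x}. \<Sum>q\<in>Back w. S (q @ p) 0 * t ^ length q / fact (length q))"
  proof (rule sum.cong[OF refl])
    fix w
    have "sum ?f (?A w) = sum (?f \<circ> (\<lambda>c. c @ [?x])) (Back w)"
      by (rule sum.reindex) (auto simp: inj_on_def)
    also have "\<dots> = (\<Sum>q\<in>Back w. S (q @ p) 0 * t ^ length q / fact (length q))"
      by (rule sum.cong) auto
    finally show "sum ?f (?A w) = (\<Sum>q\<in>Back w. S (q @ p) 0 * t ^ length q / fact (length q))" .
  qed
  finally show ?thesis .
qed

lemma R_shift:
  assumes "r w (hd p)" "p \<noteq> []"
  shows "R (w # p) t = (\<Sum>q\<in>Back w. S (q @ p) 0 * t ^ (length q - 1) / fact (length q - 1))"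
  unfolding R_def
proof (rule sum.cong)
  fix q assume "q \<in> Back w"
  hence q: "q \<noteq> []" "last q = w" unfolding Back_def using path_in_nonempty by auto
  have qe: "q = butlast q @ [w]" using q append_butlast_last_id by metis
  have e: "butlast q @ w # p = q @ p" by (subst (2) qe) simp
  show "S (butlast q @ w # p) 0 * t ^ (length q - 1) / fact (length q - 1) =
        S (q @ p) 0 * t ^ (length q - 1) / fact (length q - 1)" by (simp only: e)
qed simp

lemma d_pow_fact:
  assumes "n \<ge> 1"
  shows "((\<lambda>s::real. s ^ n / fact n) has_real_derivative t ^ (n - 1) / fact (n - 1)) (at t within X)"
proof -
  have "((\<lambda>s::real. s ^ n / fact n) has_real_derivative (real n * t ^ (n - 1)) / fact n) (at t within X)"
    by (intro derivative_eq_intros) auto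
  moreover have "(real n * t ^ (n - 1)) / fact n = t ^ (n - 1) / fact (n - 1)"
  proof -
    obtain m where m: "n = Suc m" using assms by (cases n) auto
    have "real (Suc m) * t ^ m / fact (Suc m) = real (Suc m) * t ^ m / (real (Suc m) * fact m)"
      by (simp only: fact_Suc of_nat_mult)
    also have "\<dots> = t ^ m / fact m" by (rule mult_divide_mult_cancel_left) simp
    finally show ?thesis unfolding m by simp
  qed
  ultimately show ?thesis by simp
qed

lemma S_poly:
  assumes p: "path_in r p" and t: "t \<in> {0..1}"
  shows "S p t = R p t"
  using p t
proof (induction "N - length p" arbitrary: p t rule: less_induct)
  case less
  have ne: "p \<noteq> []" using less.prems path_in_nonempty by auto
  have IH: "S (w # p) s = R (w # p) s" if "r w (hd p)" "s \<in> {0..1}" for w s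
  proof (rule less.hyps)
    have pw: "path_in r (w # p)" using less.prems(1) that ne by (auto simp: path_in_Cons)
    show "path_in r (w # p)" by (fact pw)
    show "N - length (w # p) < N - length p" using bound[OF pw] by simp
  qed (use that in auto)
  let ?D = "\<lambda>s. S p s - R p s"
  have "((\<lambda>s. ?D s) has_real_derivative 0) (at s within {0..1})" if s: "s \<in> {0..1}" for s
  proof -
    have d1: "((\<lambda>s. S p s) has_real_derivative (\<Sum>w\<in>{w. r w (hd p)}. S (w # p) s)) (at s within {0..1})"
      by (rule dS[OF less.prems(1) s])
    have d2': "((\<lambda>s. R p s) has_real_derivative 0 + (\<Sum>w\<in>{w. r w (hd p)}.
        \<Sum>q\<in>Back w. S (q @ p) 0 * (s ^ (length q - 1) / fact (length q - 1)))) (at s within {0..1})"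
      unfolding R_decomp[OF ne]
    proof (intro DERIV_add DERIV_const DERIV_sum)
      fix w q assume "w \<in> {w. r w (hd p)}" "q \<in> Back w"
      hence "length q \<ge> 1" unfolding Back_def using path_in_nonempty
        by (metis (mono_tags, lifting) One_nat_def Suc_leI length_greater_0_conv mem_Collect_eq)
      hence "((\<lambda>s. S (q @ p) 0 * (s ^ length q / fact (length q))) has_real_derivative
          S (q @ p) 0 * (s ^ (length q - 1) / fact (length q - 1))) (at s within {0..1})"
        by (intro DERIV_cmult d_pow_fact)
      thus "((\<lambda>s. S (q @ p) 0 * s ^ length q / fact (length q)) has_real_derivative
          S (q @ p) 0 * (s ^ (length q - 1) / fact (length q - 1))) (at s within {0..1})"
        by (simp add: times_divide_eq_right)
    qed
    have d2: "((\<lambda>s. R p s) has_real_derivative (\<Sum>w\<in>{w. r w (hd p)}.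
        \<Sum>q\<in>Back w. S (q @ p) 0 * (s ^ (length q - 1) / fact (length q - 1)))) (at s within {0..1})"
      using d2' by simp
    have eq: "(\<Sum>w\<in>{w. r w (hd p)}. S (w # p) s) = (\<Sum>w\<in>{w. r w (hd p)}.
        \<Sum>q\<in>Back w. S (q @ p) 0 * (s ^ (length q - 1) / fact (length q - 1)))"
    proof (rule sum.cong[OF refl])
      fix w assume w: "w \<in> {w. r w (hd p)}"
      show "S (w # p) s = (\<Sum>q\<in>Back w. S (q @ p) 0 * (s ^ (length q - 1) / fact (length q - 1)))"
        using IH[of w s] w s R_shift[of w p s] ne by (simp add: times_divide_eq_right)
    qed
    show ?thesis using DERIV_diff[OF d1 d2] unfolding eq by simp
  qed
  then obtain c where c: "\<forall>s\<in>{0..1}. ?D s = c"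
    using has_field_derivative_zero_constant[of "{0..1::real}" ?D] by auto
  have "?D 0 = 0"
  proof -
    have "R p 0 = S p 0"
    proof -
      have "(\<Sum>w\<in>{w. r w (hd p)}. \<Sum>q\<in>Back w. S (q @ p) 0 * 0 ^ length q / fact (length q)) = 0"
      proof (intro sum.neutral ballI)
        fix w q assume "w \<in> {w. r w (hd p)}" "q \<in> Back w"
        hence "length q \<noteq> 0" unfolding Back_def using path_in_nonempty by auto
        thus "S (q @ p) 0 * 0 ^ length q / fact (length q) = 0" by simp
      qed
      thus ?thesis unfolding R_decomp[OF ne] by simp
    qed
    thus ?thesis by simp
  qed
  hence "c = 0" using c by auto
  thus ?case using c less.prems(2) by auto
qed

end


lemma path_split:
  assumes p: "path_in R c" and i: "i < length c"
  shows "c = take (Suc i) c @ tl (drop i c)" "path_in R (take (Suc i) c)" "path_in R (drop i c)"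
    "last (take (Suc i) c) = c ! i" "hd (drop i c) = c ! i"
    "hd (take (Suc i) c) = hd c" "last (drop i c) = last c"
proof -
  show "c = take (Suc i) c @ tl (drop i c)"
    by (metis append_take_drop_id drop_Suc tl_drop)
  show "path_in R (take (Suc i) c)" using path_in_take[OF p] by simp
  show "path_in R (drop i c)" using path_in_drop[OF p i] .
  show "last (take (Suc i) c) = c ! i" using i by (subst last_conv_nth) auto
  show "hd (drop i c) = c ! i" using i by (simp add: hd_drop_conv_nth)
  show "hd (take (Suc i) c) = hd c" using i by (cases c) auto
  show "last (drop i c) = last c" using i by simp
qed

lemma concat_inj:
  assumes d: "distinct (a @ tl b)" and ne: "a \<noteq> []" "b \<noteq> []" "a' \<noteq> []" "b' \<noteq> []"
    and l: "last a = x" "hd b = x" "last a' = x" "hd b' = x"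
    and eq: "a @ tl b = a' @ tl b'"
  shows "a = a' \<and> b = b'"
proof -
  let ?g = "a @ tl b"
  have i1: "?g ! (length a - 1) = x" using ne l by (simp add: nth_append last_conv_nth)
  have i2: "?g ! (length a' - 1) = x" using ne l eq by (simp add: nth_append last_conv_nth)
  have L1: "length a - 1 < length ?g" using ne(1) by (cases a) auto
  have "length ?g = length a' + length (tl b')" using eq by simp
  hence L2: "length a' - 1 < length ?g" using ne(3) by (cases a') auto
  have "length a - 1 = length a' - 1" using nth_eq_iff_index_eq[OF d L1 L2] i1 i2 by simp
  hence la: "length a = length a'" using ne by (cases a; cases a') auto
  have aa: "a = a' \<and> tl b = tl b'" using append_eq_append_conv[of a a' "tl b" "tl b'"] eq la by simp
  thus ?thesis using ne l by (cases b; cases b') auto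
qed

context geo
begin

lemma dist_refl: "dist x x = 0"
  using plen[of "[x]"] by simp

lemma path_distinct: "path_in r c \<Longrightarrow> distinct c"
proof (rule ccontr)
  assume p: "path_in r c" and nd: "\<not> distinct c"
  then obtain i j where ij: "i < j" "j < length c" "c ! i = c ! j"
    by (metis distinct_conv_nth linorder_neqE_nat)
  let ?q = "drop i (take (Suc j) c)"
  have q: "path_in r ?q" using p ij by (intro path_in_drop path_in_take) auto
  have "hd ?q = c ! i" using ij by (simp add: hd_drop_conv_nth)
  moreover have "last ?q = c ! j" using ij by (subst last_conv_nth) auto
  ultimately have "length ?q = 1" using plen[OF q] ij dist_refl by simp
  moreover have "length ?q = Suc j - i" using ij by simp
  ultimately show False using ij by simp
qed

lemma C_nonneg: "path_in r c \<Longrightarrow> t \<in> {0..1} \<Longrightarrow> C t c \<ge> 0"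
proof (induction c rule: induct_list012)
  case 1 thus ?case by simp
next
  case (2 x) thus ?case using fnn by simp
next
  case (3 x y zs)
  show ?case
  proof (cases zs)
    case Nil thus ?thesis using 3 gpos[of x y t] by simp
  next
    case (Cons z r')
    have "F t y > 0" using fpos[of x y z t] 3 Cons by simp
    moreover have "C t (y # zs) \<ge> 0" using 3 by simp
    moreover have "G t x y > 0" using 3 gpos by simp
    ultimately show ?thesis using Cons by (simp add: Cpath_Cons3)
  qed
qed

lemma C_pos: "path_in r c \<Longrightarrow> length c \<ge> 2 \<Longrightarrow> t \<in> {0..1} \<Longrightarrow> C t c > 0"
proof (induction c rule: induct_list012)
  case 1 thus ?case by simp
next
  case (2 x) thus ?case by simp
next
  case (3 x y zs)
  show ?case
  proof (cases zs)
    case Nil thus ?thesis using 3 gpos[of x y t] by simp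
  next
    case (Cons z r')
    have "F t y > 0" using fpos[of x y z t] 3 Cons by simp
    moreover have "C t (y # zs) > 0" using 3 Cons by simp
    moreover have "G t x y > 0" using 3 gpos by simp
    ultimately show ?thesis using Cons by (simp add: Cpath_Cons3)
  qed
qed

lemma C_extremal_const:
  assumes e: "extremal r c" and t: "t \<in> {0..1}"
  shows "C t c = C 0 c"
proof -
  have p: "path_in r c" and hA: "hd c \<in> Aset r" and lB: "last c \<in> Bset r"
    using e unfolding extremal_def by auto
  have "((\<lambda>s. C s c) has_real_derivative 0) (at s within {0..1})" if s: "s \<in> {0..1}" for s
  proof -
    have "{w. r w (hd c)} = {}" using hA by (simp add: Aset_def bwd_def)
    hence "In s c = 0" by (simp only: In_def sum.empty)
    moreover have "{u. r (last c) u} = {}" using lB by (simp add: Bset_def fwd_def)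
    hence "Out s c = 0" by (simp only: Out_def sum.empty)
    ultimately show ?thesis using dC[OF p s] by simp
  qed
  then obtain k where "\<forall>s\<in>{0..1}. C s c = k"
    using has_field_derivative_zero_constant[of "{0..1::real}" "\<lambda>s. C s c"] by auto
  thus ?thesis using t by auto
qed

lemma SE1_ne: "\<exists>a. a \<in> SE1 x"
proof -
  have "\<exists>c. c \<in> Back x \<and> (\<forall>d. d \<in> Back x \<longrightarrow> length d \<le> length c)"
  proof (rule ex_has_greatest_nat[of "\<lambda>c. c \<in> Back x" "[x]" length "Suc N"])
    show "[x] \<in> Back x" unfolding Back_def by simp
    show "\<forall>y. y \<in> Back x \<longrightarrow> length y < Suc N" unfolding Back_def using bound by (auto simp: le_imp_less_Suc)
  qed
  then obtain c where c: "c \<in> Back x" "\<And>d. d \<in> Back x \<Longrightarrow> length d \<le> length c" by blast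
  have pc: "path_in r c" "last c = x" using c(1) unfolding Back_def by auto
  have ne: "c \<noteq> []" using pc path_in_nonempty by auto
  have "hd c \<in> Aset r"
  proof (rule ccontr)
    assume "hd c \<notin> Aset r"
    then obtain w where w: "r w (hd c)" by (auto simp: Aset_def bwd_def)
    have "w # c \<in> Back x" using pc w ne unfolding Back_def by (auto simp: path_in_Cons)
    from c(2)[OF this] show False by simp
  qed
  thus ?thesis using pc unfolding SE1_def by auto
qed

end


lemma sum_concat_image:
  assumes "finite A" "finite B" "inj_on (\<lambda>(a, b). a @ tl b) (A \<times> B)"
  shows "(\<Sum>a\<in>A. \<Sum>b\<in>B. h (a @ tl b)) = (\<Sum>c\<in>(\<lambda>(a, b). a @ tl b) ` (A \<times> B). h c)"
proof -
  have "(\<Sum>a\<in>A. \<Sum>b\<in>B. h (a @ tl b)) = (\<Sum>p\<in>A \<times> B. h ((\<lambda>(a, b). a @ tl b) p))"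
    by (simp add: sum.cartesian_product case_prod_beta)
  also have "\<dots> = (\<Sum>c\<in>(\<lambda>(a, b). a @ tl b) ` (A \<times> B). h c)"
    using sum.reindex[OF assms(3), of h] by simp
  finally show ?thesis .
qed

lemma concat_butlast: "a \<noteq> [] \<Longrightarrow> b \<noteq> [] \<Longrightarrow> last a = hd b \<Longrightarrow> a @ tl b = butlast a @ b"
  by (metis append.assoc append_Cons append_Nil append_butlast_last_id list.collapse)

lemma last_concat: "a \<noteq> [] \<Longrightarrow> b \<noteq> [] \<Longrightarrow> last a = hd b \<Longrightarrow> last (a @ tl b) = last b"
  by (metis concat_butlast last_appendR)

lemma hd_concat: "a \<noteq> [] \<Longrightarrow> hd (a @ tl b) = hd a"
  by simp

context geo
begin

definition Ext2 :: "'v \<Rightarrow> 'v \<Rightarrow> 'v list set" where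
  "Ext2 x z = {c. extremal r c \<and> (\<exists>i j. i \<le> j \<and> j < length c \<and> c ! i = x \<and> c ! j = z)}"

lemma mval2: "mval r F G [x, z] = (\<Sum>c\<in>Ext2 x z. C 0 c)"
proof -
  have "{c. extremal r c \<and> (\<exists>ks. length ks = length [x, z] \<and> sorted ks \<and>
         (\<forall>i<length [x, z]. ks ! i < length c \<and> c ! (ks ! i) = [x, z] ! i))} = Ext2 x z"
  proof (rule set_eqI, rule iffI)
    fix c assume "c \<in> {c. extremal r c \<and> (\<exists>ks. length ks = length [x, z] \<and> sorted ks \<and>
         (\<forall>i<length [x, z]. ks ! i < length c \<and> c ! (ks ! i) = [x, z] ! i))}"
    then obtain ks where e: "extremal r c" and ks0: "length ks = length [x, z]" "sorted ks"
      "\<forall>i<length [x, z]. ks ! i < length c \<and> c ! (ks ! i) = [x, z] ! i" by blast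
    have ks: "length ks = 2" "sorted ks" "\<forall>i<2. ks ! i < length c \<and> c ! (ks ! i) = [x, z] ! i"
      using ks0 by auto
    obtain i j where ij: "ks = [i, j]" using ks(1)
      by (metis (no_types, opaque_lifting) Suc_length_conv length_0_conv numeral_2_eq_2)
    have "i \<le> j" using ks(2) ij by simp
    moreover have "i < length c \<and> c ! i = x" using ks(3)[rule_format, of 0] ij by simp
    moreover have "j < length c \<and> c ! j = z" using ks(3)[rule_format, of 1] ij by simp
    ultimately show "c \<in> Ext2 x z" unfolding Ext2_def using e by auto
  next
    fix c assume "c \<in> Ext2 x z"
    then obtain i j where e: "extremal r c" and ij: "i \<le> j" "j < length c" "c ! i = x" "c ! j = z"
      unfolding Ext2_def by auto
    have "\<forall>k<2. [i, j] ! k < length c \<and> c ! ([i, j] ! k) = [x, z] ! k"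
      using ij by (auto simp: less_2_cases_iff)
    thus "c \<in> {c. extremal r c \<and> (\<exists>ks. length ks = length [x, z] \<and> sorted ks \<and>
         (\<forall>i<length [x, z]. ks ! i < length c \<and> c ! (ks ! i) = [x, z] ! i))}"
      using e ij by (intro CollectI conjI exI[of _ "[i, j]"]) auto
  qed
  thus ?thesis unfolding mval_def by simp
qed

definition Mset :: "'v \<Rightarrow> 'v \<Rightarrow> 'v list set" where
  "Mset x z = {c. path_in r c \<and> hd c = x \<and> last c \<in> Bset r \<and> z \<in> set c}"
definition Bxz :: "'v \<Rightarrow> 'v \<Rightarrow> 'v list set" where
  "Bxz x z = {c. path_in r c \<and> hd c = x \<and> last c = z}"
definition T :: "'v \<Rightarrow> 'v \<Rightarrow> real" where
  "T x z = (\<Sum>q\<in>Bxz x z. S q 0)"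
definition Sig1 :: "'v \<Rightarrow> real" where
  "Sig1 x = (\<Sum>a\<in>SE1 x. C 0 a)"

lemma finite_Bxz: "finite (Bxz x z)"
  by (rule finite_subset[OF _ finite_Back[of z]]) (auto simp: Bxz_def Back_def)

lemma inj_concat:
  assumes "\<And>a. a \<in> A \<Longrightarrow> path_in r a \<and> last a = y"
    and "\<And>b. b \<in> B \<Longrightarrow> path_in r b \<and> hd b = y"
  shows "inj_on (\<lambda>(a, b). a @ tl b) (A \<times> B)"
proof (rule inj_onI, clarsimp)
  fix a b a' b' assume m: "a \<in> A" "b \<in> B" "a' \<in> A" "b' \<in> B" and eq: "a @ tl b = a' @ tl b'"
  have pa: "path_in r a" "last a = y" "path_in r b" "hd b = y" using assms m by auto
  have pa': "path_in r a'" "last a' = y" "path_in r b'" "hd b' = y" using assms m by auto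
  have d: "distinct (a @ tl b)" using path_distinct[OF path_in_append[OF pa(1,3)]] pa by simp
  show "a = a' \<and> b = b'"
    by (rule concat_inj[OF d _ _ _ _ pa(2) pa(4) pa'(2) pa'(4) eq])
       (use pa pa' path_in_nonempty in auto)
qed

lemma image1: "(\<lambda>(a, b). a @ tl b) ` (Bxz x z \<times> SE2 z) = Mset x z"
proof (rule set_eqI, rule iffI)
  fix c assume "c \<in> (\<lambda>(a, b). a @ tl b) ` (Bxz x z \<times> SE2 z)"
  then obtain a b where c: "c = a @ tl b" and a: "path_in r a" "hd a = x" "last a = z"
    and b: "path_in r b" "hd b = z" "last b \<in> Bset r"
    unfolding Bxz_def SE2_def by auto
  have ne: "a \<noteq> []" "b \<noteq> []" using a b path_in_nonempty by auto
  have "z \<in> set c" using c ne a by auto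
  thus "c \<in> Mset x z" unfolding Mset_def c
    using path_in_append[OF a(1) b(1)] a b ne last_concat[OF ne] by simp
next
  fix c assume "c \<in> Mset x z"
  hence c: "path_in r c" "hd c = x" "last c \<in> Bset r" "z \<in> set c" unfolding Mset_def by auto
  obtain j where j: "j < length c" "c ! j = z" using c(4) by (metis in_set_conv_nth)
  note sp = path_split[OF c(1) j(1)]
  have "take (Suc j) c \<in> Bxz x z" unfolding Bxz_def using sp c j by auto
  moreover have "drop j c \<in> SE2 z" unfolding SE2_def using sp c j by auto
  ultimately show "c \<in> (\<lambda>(a, b). a @ tl b) ` (Bxz x z \<times> SE2 z)"
    using sp(1) by (intro image_eqI[where x="(take (Suc j) c, drop j c)"]) auto
qed

lemma image2: "(\<lambda>(a, b). a @ tl b) ` (SE1 x \<times> Mset x z) = Ext2 x z"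
proof (rule set_eqI, rule iffI)
  fix c assume "c \<in> (\<lambda>(a, b). a @ tl b) ` (SE1 x \<times> Mset x z)"
  then obtain a b where c: "c = a @ tl b" and a: "path_in r a" "hd a \<in> Aset r" "last a = x"
    and b: "path_in r b" "hd b = x" "last b \<in> Bset r" "z \<in> set b"
    unfolding SE1_def Mset_def by auto
  have ne: "a \<noteq> []" "b \<noteq> []" using a b path_in_nonempty by auto
  have cb: "c = butlast a @ b" using c concat_butlast[OF ne] a b by simp
  obtain k where k: "k < length b" "b ! k = z" using b(4) by (metis in_set_conv_nth)
  have bx: "b = x # tl b" using ne b by (cases b) auto
  have "c ! length (butlast a) = x" using cb bx nth_append_length[of "butlast a" x "tl b"] by simp
  moreover have "c ! (length (butlast a) + k) = z" using cb k by (simp add: nth_append)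
  moreover have "length (butlast a) + k < length c" using cb k by simp
  moreover have "extremal r c" unfolding extremal_def c
    using path_in_append[OF a(1) b(1)] a b ne last_concat[OF ne] by simp
  ultimately show "c \<in> Ext2 x z" unfolding Ext2_def
    by (intro CollectI conjI exI[of _ "length (butlast a)"] exI[of _ "length (butlast a) + k"]) auto
next
  fix c assume "c \<in> Ext2 x z"
  then obtain i j where e: "extremal r c" and ij: "i \<le> j" "j < length c" "c ! i = x" "c ! j = z"
    unfolding Ext2_def by auto
  have c: "path_in r c" "hd c \<in> Aset r" "last c \<in> Bset r" using e unfolding extremal_def by auto
  have i: "i < length c" using ij by simp
  note sp = path_split[OF c(1) i]
  have "drop i c ! (j - i) = z" using ij by simp
  moreover have "j - i < length (drop i c)" using ij by simp
  ultimately have "z \<in> set (drop i c)" by (metis nth_mem)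
  hence "drop i c \<in> Mset x z" unfolding Mset_def using sp c ij by auto
  moreover have "take (Suc i) c \<in> SE1 x" unfolding SE1_def using sp c ij by auto
  ultimately show "c \<in> (\<lambda>(a, b). a @ tl b) ` (SE1 x \<times> Mset x z)"
    using sp(1) by (intro image_eqI[where x="(take (Suc i) c, drop i c)"]) auto
qed

lemma finite_Mset: "finite (Mset x z)"
  by (rule finite_subset[OF _ finite_Fw[of x]]) (auto simp: Mset_def Fw_def)

lemma T_Mset: "T x z = (\<Sum>c\<in>Mset x z. C 0 c)"
proof -
  have "T x z = (\<Sum>q\<in>Bxz x z. \<Sum>b\<in>SE2 z. C 0 (q @ tl b))"
    unfolding T_def S_def by (rule sum.cong) (auto simp: Bxz_def)
  also have "\<dots> = (\<Sum>c\<in>(\<lambda>(a, b). a @ tl b) ` (Bxz x z \<times> SE2 z). C 0 c)"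
    by (rule sum_concat_image[OF finite_Bxz finite_SE2 inj_concat[where y = z]])
       (auto simp: Bxz_def SE2_def)
  finally show ?thesis unfolding image1 .
qed

lemma two_edges:
  assumes "path_in r c" "length c \<ge> 2"
  shows "r (hd c) (c ! 1)" "r (c ! (length c - 2)) (last c)"
proof -
  have "r (c ! 0) (c ! Suc 0)" using assms unfolding path_in_def by auto
  thus "r (hd c) (c ! 1)" using path_in_nonempty[OF assms(1)] by (simp add: hd_conv_nth)
  have "r (c ! (length c - 2)) (c ! Suc (length c - 2))"
    using assms unfolding path_in_def by auto
  moreover have "Suc (length c - 2) = length c - 1" using assms by simp
  ultimately show "r (c ! (length c - 2)) (last c)" using assms path_in_nonempty[OF assms(1)] by (simp add: last_conv_nth)
qed

lemma key_identity: "Sig1 x * T x z = F 0 x * mval r F G [x, z]"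
proof -
  have "Sig1 x * T x z = (\<Sum>a\<in>SE1 x. \<Sum>b\<in>Mset x z. C 0 a * C 0 b)"
    unfolding Sig1_def T_Mset sum_product by simp
  also have "\<dots> = (\<Sum>a\<in>SE1 x. \<Sum>b\<in>Mset x z. F 0 x * C 0 (a @ tl b))"
  proof (intro sum.cong refl)
    fix a b assume a: "a \<in> SE1 x" and b: "b \<in> Mset x z"
    have pa: "path_in r a" "last a = x" using a unfolding SE1_def by auto
    have pb: "path_in r b" "hd b = x" using b unfolding Mset_def by auto
    have "C 0 (a @ tl b) * F 0 (hd b) = C 0 a * C 0 b"
    proof (rule Cpath_concat)
      show "a \<noteq> []" "b \<noteq> []" using pa pb path_in_nonempty by auto
      show "last a = hd b" using pa pb by simp
      assume "2 \<le> length a" "2 \<le> length b"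
      hence "r (a ! (length a - 2)) x" "r x (b ! 1)" using two_edges pa pb by metis+
      hence "F 0 x > 0" using fpos by auto
      thus "F 0 (hd b) \<noteq> 0" using pb by simp
    qed
    thus "C 0 a * C 0 b = F 0 x * C 0 (a @ tl b)" using pb by (simp add: ac_simps)
  qed
  also have "\<dots> = F 0 x * (\<Sum>a\<in>SE1 x. \<Sum>b\<in>Mset x z. C 0 (a @ tl b))"
    by (simp add: sum_distrib_left)
  also have "(\<Sum>a\<in>SE1 x. \<Sum>b\<in>Mset x z. C 0 (a @ tl b)) = (\<Sum>c\<in>Ext2 x z. C 0 c)"
    unfolding image2[symmetric]
    by (rule sum_concat_image[OF finite_SE1 finite_Mset inj_concat[where y = x]])
       (auto simp: SE1_def Mset_def)
  finally show ?thesis unfolding mval2 .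
qed

end


context geo
begin

lemma B_single: "x \<in> Bset r \<Longrightarrow> path_in r c \<Longrightarrow> hd c = x \<Longrightarrow> c = [x]"
proof -
  assume x: "x \<in> Bset r" and p: "path_in r c" and h: "hd c = x"
  have "\<not> length c \<ge> 2"
  proof
    assume "length c \<ge> 2"
    hence "r x (c ! 1)" using two_edges[OF p] h by auto
    thus False using x by (auto simp: Bset_def fwd_def)
  qed
  moreover have "c \<noteq> []" using p path_in_nonempty by auto
  ultimately have "length c = 1" by (cases c) (auto simp: Suc_le_eq)
  thus "c = [x]" using h by (cases c) auto
qed

definition aco :: "'v \<Rightarrow> real" where
  "aco x = F 0 x / Sig1 x"

lemma Sig1_nonneg_ge: "a \<in> SE1 x \<Longrightarrow> C 0 a \<le> Sig1 x"
  unfolding Sig1_def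
  by (rule member_le_sum[OF _ _ finite_SE1]) (auto simp: SE1_def intro: C_nonneg)

lemma T_aco: "T x z = mval r F G [x, z] * aco x"
proof (cases "Sig1 x = 0")
  case False
  thus ?thesis using key_identity[of x z] unfolding aco_def by (simp add: field_simps)
next
  case True
  have xA: "x \<in> Aset r"
  proof (rule ccontr)
    assume nA: "x \<notin> Aset r"
    obtain a where a: "a \<in> SE1 x" using SE1_ne by blast
    have pa: "path_in r a" "hd a \<in> Aset r" "last a = x" using a unfolding SE1_def by auto
    have "length a \<ge> 2"
    proof (rule ccontr)
      assume "\<not> length a \<ge> 2"
      moreover have "a \<noteq> []" using pa path_in_nonempty by auto
      ultimately have "length a = 1" by (cases a) (auto simp: Suc_le_eq)
      hence "hd a = last a" by (cases a) auto
      thus False using pa nA by simp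
    qed
    hence "C 0 a > 0" using C_pos pa by auto
    thus False using Sig1_nonneg_ge[OF a] True by simp
  qed
  have F0: "F 0 x = 0"
  proof -
    have "[x] \<in> SE1 x" using xA unfolding SE1_def by simp
    hence "F 0 x \<le> 0" using Sig1_nonneg_ge[of "[x]" x] True by simp
    thus ?thesis using fnn[of 0 x] by simp
  qed
  have xB: "x \<in> Bset r"
  proof (rule ccontr)
    assume "x \<notin> Bset r"
    then obtain u where u: "r x u" by (auto simp: Bset_def fwd_def)
    have bw: "{w. r w x} = {}" using xA by (simp add: Aset_def bwd_def)
    have "(\<Sum>v\<in>{v. r x v}. G 0 x v) > 0"
      by (rule sum_pos) (use fin_f u gpos in auto)
    hence neg: "- div_g r (G 0) x < 0" unfolding div_g_def fwd_def bwd_def bw by simp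
    obtain d where d: "d > 0" "\<And>h. h > 0 \<Longrightarrow> 0 + h \<in> {0..1} \<Longrightarrow> h < d \<Longrightarrow> F 0 x > F (0 + h) x"
      using has_real_derivative_neg_dec_right[OF dF[of 0 x] neg] by auto
    define h where "h = min (d / 2) 1"
    have "F 0 x > F (0 + h) x" using d h_def by (intro d(2)) auto
    moreover have "F h x \<ge> 0" using fnn h_def d by auto
    ultimately show False using F0 by simp
  qed
  have "T x z = 0"
    unfolding T_def
  proof (rule sum.neutral, rule ballI)
    fix q assume "q \<in> Bxz x z"
    hence q: "q = [x]" using B_single[OF xB] unfolding Bxz_def by auto
    show "S q 0 = 0" unfolding q S_def
    proof (rule sum.neutral, rule ballI)
      fix b assume "b \<in> SE2 (last [x])"
      hence b: "b = [x]" using B_single[OF xB] unfolding SE2_def by auto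
      show "C 0 ([x] @ tl b) = 0" using b F0 by simp
    qed
  qed
  thus ?thesis unfolding aco_def using True by simp
qed

theorem P_formula:
  "\<exists>a. \<forall>t\<in>{0..1}. \<forall>z. (\<Sum>c\<in>SE2 z. C t c) =
     (\<Sum>x\<in>{x. oleq r x z}. mval r F G [x, z] * a x * t ^ dist x z / fact (dist x z))"
proof (intro exI ballI allI)
  fix t z assume t: "t \<in> {0..1::real}"
  have "(\<Sum>c\<in>SE2 z. C t c) = S [z] t"
    unfolding S_def
  proof (rule sum.cong)
    fix b assume "b \<in> SE2 (last [z])"
    hence "b \<noteq> []" "hd b = z" unfolding SE2_def using path_in_nonempty by auto
    thus "C t b = C t ([z] @ tl b)" by (cases b) auto
  qed simp
  also have "\<dots> = R [z] t" by (rule S_poly) (use t in auto)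
  also have "\<dots> = (\<Sum>q\<in>Back z. S q 0 * t ^ (length q - 1) / fact (length q - 1))"
    unfolding R_def
  proof (rule sum.cong)
    fix q assume "q \<in> Back z"
    hence "q \<noteq> []" "last q = z" unfolding Back_def using path_in_nonempty by auto
    hence "butlast q @ [z] = q" by (metis append_butlast_last_id)
    thus "S (butlast q @ [z]) 0 * t ^ (length q - 1) / fact (length q - 1) =
          S q 0 * t ^ (length q - 1) / fact (length q - 1)" by simp
  qed simp
  also have "\<dots> = (\<Sum>x\<in>hd ` Back z. \<Sum>q\<in>{q. q \<in> Back z \<and> hd q = x}. S q 0 * t ^ (length q - 1) / fact (length q - 1))"
    by (rule sum.image_gen[OF finite_Back])
  also have "\<dots> = (\<Sum>x\<in>{x. oleq r x z}. mval r F G [x, z] * aco x * t ^ dist x z / fact (dist x z))"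
  proof (rule sum.cong)
    show "hd ` Back z = {x. oleq r x z}"
      unfolding Back_def oleq_def by auto
  next
    fix x assume "x \<in> {x. oleq r x z}"
    have "(\<Sum>q\<in>{q. q \<in> Back z \<and> hd q = x}. S q 0 * t ^ (length q - 1) / fact (length q - 1)) =
          (\<Sum>q\<in>Bxz x z. S q 0 * (t ^ dist x z / fact (dist x z)))"
    proof (rule sum.cong)
      show "{q. q \<in> Back z \<and> hd q = x} = Bxz x z" unfolding Back_def Bxz_def by auto
    next
      fix q assume "q \<in> Bxz x z"
      hence "length q - 1 = dist x z" using plen unfolding Bxz_def by auto
      thus "S q 0 * t ^ (length q - 1) / fact (length q - 1) = S q 0 * (t ^ dist x z / fact (dist x z))"
        by simp
    qed
    also have "\<dots> = T x z * (t ^ dist x z / fact (dist x z))"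
      unfolding T_def by (simp add: sum_distrib_right sum_divide_distrib)
    finally show "(\<Sum>q\<in>{q. q \<in> Back z \<and> hd q = x}. S q 0 * t ^ (length q - 1) / fact (length q - 1)) =
        mval r F G [x, z] * aco x * t ^ dist x z / fact (dist x z)"
      unfolding T_aco by simp
  qed
  finally show "(\<Sum>c\<in>SE2 z. C t c) =
     (\<Sum>x\<in>{x. oleq r x z}. mval r F G [x, z] * aco x * t ^ dist x z / fact (dist x z))" .
qed

end


locale graph =
  fixes adj :: "'v \<Rightarrow> 'v \<Rightarrow> bool"
  assumes sym: "\<forall>x y. adj x y \<longrightarrow> adj y x"
    and loc_fin: "\<forall>x. finite {y. adj x y}"
    and connected: "\<forall>x y. \<exists>\<gamma>. path_in adj \<gamma> \<and> hd \<gamma> = x \<and> last \<gamma> = y"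
begin

abbreviation "d \<equiv> gdist adj"

lemma gdist_le: "path_in adj c \<Longrightarrow> d (hd c) (last c) \<le> length c - 1"
proof -
  assume c: "path_in adj c"
  have "c \<noteq> []" using path_in_nonempty[OF c] .
  thus ?thesis unfolding gdist_def using c by (intro Least_le exI[of _ c]) auto
qed

lemma gdist_ex: "\<exists>c. path_in adj c \<and> hd c = x \<and> last c = y \<and> length c = Suc (d x y)"
proof -
  obtain c where c: "path_in adj c" "hd c = x" "last c = y" using connected by blast
  hence "\<exists>n c. path_in adj c \<and> hd c = x \<and> last c = y \<and> length c = Suc n"
    using path_in_nonempty[OF c(1)] by (intro exI[of _ "length c - 1"] exI[of _ c]) auto
  from LeastI_ex[OF this] show ?thesis unfolding gdist_def by simp
qed

lemma gdist_refl: "d x x = 0"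
  using gdist_le[of "[x]"] by simp

lemma gdist_tri: "d x z \<le> d x y + d y z"
proof -
  obtain a where a: "path_in adj a" "hd a = x" "last a = y" "length a = Suc (d x y)" using gdist_ex by blast
  obtain b where b: "path_in adj b" "hd b = y" "last b = z" "length b = Suc (d y z)" using gdist_ex by blast
  have ne: "a \<noteq> []" "b \<noteq> []" using a b path_in_nonempty by auto
  have p: "path_in adj (a @ tl b)" using path_in_append[OF a(1) b(1)] a b by simp
  have "hd (a @ tl b) = x" using ne a by simp
  moreover have "last (a @ tl b) = z"
    using last_concat[OF ne] a b by simp
  ultimately have "d x z \<le> length (a @ tl b) - 1" using gdist_le[OF p] by simp
  thus ?thesis using a b ne by simp
qed

lemma gdist_sym: "d x y = d y x"
proof -
  have le: "d u v \<le> d v u" for u v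
  proof -
    obtain c where c: "path_in adj c" "hd c = v" "last c = u" "length c = Suc (d v u)" using gdist_ex by blast
    have "path_in adj (rev c)" unfolding path_in_rev by (rule path_in_mono[OF c(1)]) (use sym in auto)
    hence "d (hd (rev c)) (last (rev c)) \<le> length (rev c) - 1" by (rule gdist_le)
    moreover have "c \<noteq> []" using c path_in_nonempty by auto
    ultimately show ?thesis using c by (simp add: hd_rev last_rev)
  qed
  show ?thesis using le[of x y] le[of y x] by simp
qed

end


definition fsupp :: "('v \<Rightarrow> 'v \<Rightarrow> real) \<Rightarrow> ('v \<times> 'v) set" where
  "fsupp p = {(x, y). p x y \<noteq> 0}"

lemma row_U: "finite U \<Longrightarrow> fsupp p \<subseteq> U \<times> U \<Longrightarrow> (\<Sum>y\<in>{y. p x y \<noteq> 0}. p x y) = (\<Sum>y\<in>U. p x y)"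
proof (cases "x \<in> U")
  case True
  assume U: "finite U" "fsupp p \<subseteq> U \<times> U"
  show ?thesis by (rule sum.mono_neutral_left) (use U True in \<open>auto simp: fsupp_def\<close>)
next
  case False
  assume U: "finite U" "fsupp p \<subseteq> U \<times> U"
  have "{y. p x y \<noteq> 0} = {}" using U False by (auto simp: fsupp_def)
  moreover have "(\<Sum>y\<in>U. p x y) = 0" using U False by (intro sum.neutral) (auto simp: fsupp_def)
  ultimately show ?thesis by simp
qed

lemma col_U: "finite U \<Longrightarrow> fsupp p \<subseteq> U \<times> U \<Longrightarrow> (\<Sum>x\<in>{x. p x y \<noteq> 0}. p x y) = (\<Sum>x\<in>U. p x y)"
proof (cases "y \<in> U")
  case True
  assume U: "finite U" "fsupp p \<subseteq> U \<times> U"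
  show ?thesis by (rule sum.mono_neutral_left) (use U True in \<open>auto simp: fsupp_def\<close>)
next
  case False
  assume U: "finite U" "fsupp p \<subseteq> U \<times> U"
  have "{x. p x y \<noteq> 0} = {}" using U False by (auto simp: fsupp_def)
  moreover have "(\<Sum>x\<in>U. p x y) = 0" using U False by (intro sum.neutral) (auto simp: fsupp_def)
  ultimately show ?thesis by simp
qed

lemma cost_U: "finite U \<Longrightarrow> fsupp p \<subseteq> U \<times> U \<Longrightarrow>
  transport_cost adj p = (\<Sum>q\<in>U \<times> U. real (gdist adj (fst q) (snd q)) * p (fst q) (snd q))"
  unfolding transport_cost_def
  by (rule sum.mono_neutral_cong_left) (auto simp: fsupp_def split: prod.splits)

lemma coupling_U:
  assumes "finite U" "fsupp p \<subseteq> U \<times> U"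
  shows "coupling f0 f1 p \<longleftrightarrow> (\<forall>x y. p x y \<ge> 0) \<and> (\<forall>x. (\<Sum>y\<in>U. p x y) = f0 x) \<and> (\<forall>y. (\<Sum>x\<in>U. p x y) = f1 y)"
proof -
  have "finite {(x, y). p x y \<noteq> 0}"
    using assms finite_subset[of "fsupp p" "U \<times> U"] unfolding fsupp_def by auto
  thus ?thesis unfolding coupling_def using row_U[OF assms] col_U[OF assms] by auto
qed

lemma fsupp_coupling: "coupling f0 f1 p \<Longrightarrow> finite (fsupp p)"
  unfolding coupling_def fsupp_def by auto

lemma cost_nonneg: "(\<forall>x y. p x y \<ge> 0) \<Longrightarrow> transport_cost adj p \<ge> 0"
  unfolding transport_cost_def by (rule sum_nonneg) auto

lemma W1_le: "coupling f0 f1 p \<Longrightarrow> W1 adj f0 f1 \<le> transport_cost adj p"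
  unfolding W1_def
proof (rule cInf_lower)
  assume "coupling f0 f1 p"
  thus "transport_cost adj p \<in> transport_cost adj ` {p. coupling f0 f1 p}" by auto
  show "bdd_below (transport_cost adj ` {p. coupling f0 f1 p})"
    by (rule bdd_belowI[of _ 0]) (auto simp: coupling_def intro: cost_nonneg)
qed

lemma average_opt:
  fixes P :: "nat \<Rightarrow> 'v \<Rightarrow> 'v \<Rightarrow> real"
  assumes L: "L > 0" and opt: "\<And>i. i < L \<Longrightarrow> P i \<in> opt_couplings adj f0 f1"
    and U: "finite U" "\<And>i. i < L \<Longrightarrow> fsupp (P i) \<subseteq> U \<times> U"
  defines "Q \<equiv> (\<lambda>x y. (\<Sum>i<L. P i x y) / real L)"
  shows "Q \<in> opt_couplings adj f0 f1" "fsupp Q \<subseteq> U \<times> U"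
    "\<And>i x y. i < L \<Longrightarrow> P i x y > 0 \<Longrightarrow> Q x y > 0"
proof -
  have cp: "coupling f0 f1 (P i)" if "i < L" for i using opt[OF that] unfolding opt_couplings_def by auto
  have nn: "P i x y \<ge> 0" if "i < L" for i x y using cp[OF that] unfolding coupling_def by auto
  show su: "fsupp Q \<subseteq> U \<times> U"
  proof
    fix q assume "q \<in> fsupp Q"
    then obtain x y where q: "q = (x, y)" "Q x y \<noteq> 0" unfolding fsupp_def by auto
    then obtain i where "i < L" "P i x y \<noteq> 0" unfolding Q_def
      by (metis (no_types, lifting) div_0 lessThan_iff sum.neutral)
    thus "q \<in> U \<times> U" using U(2) q unfolding fsupp_def by auto
  qed
  have cQ: "coupling f0 f1 Q"
    unfolding coupling_U[OF U(1) su]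
  proof (intro conjI allI)
    fix x y show "Q x y \<ge> 0" unfolding Q_def by (intro divide_nonneg_nonneg sum_nonneg) (use nn in auto)
  next
    fix x
    have "(\<Sum>y\<in>U. Q x y) = (\<Sum>i<L. \<Sum>y\<in>U. P i x y) / real L"
      unfolding Q_def by (simp add: sum_divide_distrib[symmetric] sum.swap[of _ U])
    also have "\<dots> = (\<Sum>i<L. f0 x) / real L"
      using cp coupling_U[OF U(1) U(2)] by (intro arg_cong[where f = "\<lambda>s. s / real L"] sum.cong) auto
    finally show "(\<Sum>y\<in>U. Q x y) = f0 x" using L by simp
  next
    fix y
    have "(\<Sum>x\<in>U. Q x y) = (\<Sum>i<L. \<Sum>x\<in>U. P i x y) / real L"
      unfolding Q_def by (simp add: sum_divide_distrib[symmetric] sum.swap[of _ U])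
    also have "\<dots> = (\<Sum>i<L. f1 y) / real L"
      using cp coupling_U[OF U(1) U(2)] by (intro arg_cong[where f = "\<lambda>s. s / real L"] sum.cong) auto
    finally show "(\<Sum>x\<in>U. Q x y) = f1 y" using L by simp
  qed
  have "transport_cost adj Q = (\<Sum>i<L. transport_cost adj (P i)) / real L"
  proof -
    have "transport_cost adj Q = (\<Sum>q\<in>U \<times> U. real (gdist adj (fst q) (snd q)) * Q (fst q) (snd q))"
      by (rule cost_U[OF U(1) su])
    also have "\<dots> = (\<Sum>i<L. \<Sum>q\<in>U \<times> U. real (gdist adj (fst q) (snd q)) * P i (fst q) (snd q)) / real L"
      unfolding Q_def by (simp add: sum_divide_distrib[symmetric] sum_distrib_left sum.swap[of _ "U \<times> U"])
    also have "\<dots> = (\<Sum>i<L. transport_cost adj (P i)) / real L"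
      using cost_U[OF U(1) U(2)] by simp
    finally show ?thesis .
  qed
  also have "\<dots> = W1 adj f0 f1" using opt L unfolding opt_couplings_def by simp
  finally show "Q \<in> opt_couplings adj f0 f1" using cQ unfolding opt_couplings_def by simp
  fix i x y assume "i < L" "P i x y > 0"
  moreover have "(\<Sum>j<L. P j x y) \<ge> P i x y"
    by (rule member_le_sum) (use nn \<open>i < L\<close> in auto)
  ultimately show "Q x y > 0" unfolding Q_def using L by (simp add: divide_pos_pos)
qed


definition ind :: "bool \<Rightarrow> real" where "ind b = (if b then 1 else 0)"

lemma sum_ind_U:
  assumes "finite U" "\<And>i. i \<in> I \<Longrightarrow> ys i \<in> U"
  shows "(\<Sum>y\<in>U. \<Sum>i\<in>I. ind (P i \<and> ys i = y)) = (\<Sum>i\<in>I. ind (P i))"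
proof -
  have "(\<Sum>y\<in>U. \<Sum>i\<in>I. ind (P i \<and> ys i = y)) = (\<Sum>i\<in>I. \<Sum>y\<in>U. ind (P i \<and> ys i = y))"
    by (rule sum.swap)
  also have "\<dots> = (\<Sum>i\<in>I. ind (P i))"
  proof (rule sum.cong[OF refl])
    fix i assume i: "i \<in> I"
    have "(\<Sum>y\<in>U. ind (P i \<and> ys i = y)) = (\<Sum>y\<in>U. if y = ys i then ind (P i) else 0)"
      by (rule sum.cong) (auto simp: ind_def)
    also have "\<dots> = ind (P i)" using assms i by (simp add: sum.delta')
    finally show "(\<Sum>y\<in>U. ind (P i \<and> ys i = y)) = ind (P i)" .
  qed
  finally show ?thesis .
qed

lemma cyc_mono:
  fixes p :: "'v \<Rightarrow> 'v \<Rightarrow> real" and xs ys :: "nat \<Rightarrow> 'v"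
  assumes opt: "p \<in> opt_couplings adj f0 f1" and U: "finite U" "fsupp p \<subseteq> U \<times> U"
    and pos: "\<And>i. i < L \<Longrightarrow> xs i \<in> U \<and> ys i \<in> U \<and> p (xs i) (ys i) > 0"
    and bij: "bij_betw s {..<L} {..<L}"
  shows "(\<Sum>i<L. real (gdist adj (xs i) (ys i))) \<le> (\<Sum>i<L. real (gdist adj (xs (s i)) (ys i)))"
proof (rule ccontr)
  assume less: "\<not> ?thesis"
  hence L: "L > 0" by (cases L) auto
  have cp: "coupling f0 f1 p" and cst: "transport_cost adj p = W1 adj f0 f1"
    using opt unfolding opt_couplings_def by auto
  have nn: "\<And>x y. p x y \<ge> 0" using cp unfolding coupling_def by auto
  define m where "m = Min ((\<lambda>i. p (xs i) (ys i)) ` {..<L})"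
  have mpos: "m > 0" unfolding m_def using pos L by (subst Min_gr_iff) auto
  have mle: "\<And>i. i < L \<Longrightarrow> m \<le> p (xs i) (ys i)" unfolding m_def by (intro Min_le) auto
  define e where "e = m / real L"
  have epos: "e > 0" using mpos L e_def by simp
  define cn where "cn = (\<lambda>x y. \<Sum>i<L. ind (xs (s i) = x \<and> ys i = y))"
  define co where "co = (\<lambda>x y. \<Sum>i<L. ind (xs i = x \<and> ys i = y))"
  define q where "q = (\<lambda>x y. p x y + e * (cn x y - co x y))"
  have cnn: "cn x y \<ge> 0" for x y unfolding cn_def by (intro sum_nonneg) (auto simp: ind_def)
  have co_le: "co x y \<le> real L" for x y
  proof -
    have "co x y \<le> (\<Sum>i<L. 1)" unfolding co_def by (intro sum_mono) (auto simp: ind_def)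
    thus ?thesis by simp
  qed
  have xsU: "xs (s i) \<in> U" if "i < L" for i using pos bij that by (meson bij_betwE lessThan_iff)
  have qsupp: "fsupp q \<subseteq> U \<times> U"
  proof
    fix z assume "z \<in> fsupp q"
    then obtain x y where z: "z = (x, y)" "q x y \<noteq> 0" unfolding fsupp_def by auto
    show "z \<in> U \<times> U"
    proof (rule ccontr)
      assume nU: "z \<notin> U \<times> U"
      hence "p x y = 0" using U(2) z unfolding fsupp_def by auto
      moreover have "cn x y = 0" unfolding cn_def using nU z xsU pos
        by (intro sum.neutral) (auto simp: ind_def)
      moreover have "co x y = 0" unfolding co_def using nU z pos
        by (intro sum.neutral) (auto simp: ind_def)
      ultimately show False using z unfolding q_def by simp
    qed
  qed
  have qnn: "q x y \<ge> 0" for x y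
  proof (cases "co x y = 0")
    case True thus ?thesis unfolding q_def using nn[of x y] cnn[of x y] epos by simp
  next
    case False
    then obtain i where i: "i < L" "xs i = x" "ys i = y" unfolding co_def
      by (metis (mono_tags, lifting) ind_def lessThan_iff sum.neutral)
    have "e * co x y \<le> e * real L" using co_le epos by (intro mult_left_mono) auto
    also have "\<dots> = m" using L unfolding e_def by simp
    also have "\<dots> \<le> p x y" using mle[OF i(1)] i by simp
    finally show ?thesis unfolding q_def using cnn[of x y] epos
      by (smt (verit, ccfv_SIG) mult_nonneg_nonneg right_diff_distrib)
  qed
  have row: "(\<Sum>y\<in>U. q x y) = f0 x" for x
  proof -
    have "(\<Sum>y\<in>U. q x y) = (\<Sum>y\<in>U. p x y) + e * ((\<Sum>y\<in>U. cn x y) - (\<Sum>y\<in>U. co x y))"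
      unfolding q_def by (simp add: sum.distrib sum_distrib_left sum_subtractf algebra_simps)
    also have "(\<Sum>y\<in>U. cn x y) = (\<Sum>i<L. ind (xs (s i) = x))"
      unfolding cn_def by (rule sum_ind_U) (use U pos in auto)
    also have "\<dots> = (\<Sum>i<L. ind (xs i = x))"
      using sum.reindex_bij_betw[OF bij, of "\<lambda>i. ind (xs i = x)"] by simp
    also have "(\<Sum>y\<in>U. co x y) = (\<Sum>i<L. ind (xs i = x))"
      unfolding co_def by (rule sum_ind_U) (use U pos in auto)
    also have "(\<Sum>y\<in>U. p x y) = f0 x" using cp coupling_U[OF U] by auto
    finally show ?thesis by simp
  qed
  have col: "(\<Sum>x\<in>U. q x y) = f1 y" for y
  proof -
    have "(\<Sum>x\<in>U. q x y) = (\<Sum>x\<in>U. p x y) + e * ((\<Sum>x\<in>U. cn x y) - (\<Sum>x\<in>U. co x y))"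
      unfolding q_def by (simp add: sum.distrib sum_distrib_left sum_subtractf algebra_simps)
    also have "(\<Sum>x\<in>U. cn x y) = (\<Sum>i<L. ind (ys i = y))"
    proof -
      have "(\<Sum>x\<in>U. cn x y) = (\<Sum>x\<in>U. \<Sum>i<L. ind (ys i = y \<and> xs (s i) = x))"
        unfolding cn_def by (intro sum.cong refl) (auto simp: ind_def)
      also have "\<dots> = (\<Sum>i<L. ind (ys i = y))" by (rule sum_ind_U) (use U xsU in auto)
      finally show ?thesis .
    qed
    also have "(\<Sum>x\<in>U. co x y) = (\<Sum>i<L. ind (ys i = y))"
    proof -
      have "(\<Sum>x\<in>U. co x y) = (\<Sum>x\<in>U. \<Sum>i<L. ind (ys i = y \<and> xs i = x))"
        unfolding co_def by (intro sum.cong refl) (auto simp: ind_def)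
      also have "\<dots> = (\<Sum>i<L. ind (ys i = y))" by (rule sum_ind_U) (use U pos in auto)
      finally show ?thesis .
    qed
    also have "(\<Sum>x\<in>U. p x y) = f1 y" using cp coupling_U[OF U] by auto
    finally show ?thesis by simp
  qed
  have cq: "coupling f0 f1 q" unfolding coupling_U[OF U(1) qsupp] using qnn row col by auto
  define D where "D = (\<lambda>z. real (gdist adj (fst z) (snd z)))"
  have pair_sum: "(\<Sum>z\<in>U \<times> U. D z * (\<Sum>i<L. ind (a i = fst z \<and> ys i = snd z))) = (\<Sum>i<L. D (a i, ys i))"
    if aU: "\<And>i. i < L \<Longrightarrow> a i \<in> U" for a
  proof -
    have "(\<Sum>z\<in>U \<times> U. D z * (\<Sum>i<L. ind (a i = fst z \<and> ys i = snd z))) =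
          (\<Sum>z\<in>U \<times> U. \<Sum>i<L. if z = (a i, ys i) then D z else 0)"
      by (rule sum.cong[OF refl]) (auto simp: sum_distrib_left ind_def intro!: sum.cong)
    also have "\<dots> = (\<Sum>i<L. \<Sum>z\<in>U \<times> U. if z = (a i, ys i) then D z else 0)"
      by (rule sum.swap)
    also have "\<dots> = (\<Sum>i<L. D (a i, ys i))"
      using U aU pos by (intro sum.cong refl) (simp add: sum.delta')
    finally show ?thesis .
  qed
  have "transport_cost adj q = transport_cost adj p + e * ((\<Sum>i<L. D (xs (s i), ys i)) - (\<Sum>i<L. D (xs i, ys i)))"
  proof -
    have "transport_cost adj q = (\<Sum>z\<in>U \<times> U. D z * q (fst z) (snd z))"
      unfolding D_def by (rule cost_U[OF U(1) qsupp])
    also have "\<dots> = (\<Sum>z\<in>U \<times> U. D z * p (fst z) (snd z)) + e * ((\<Sum>z\<in>U \<times> U. D z * cn (fst z) (snd z))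
       - (\<Sum>z\<in>U \<times> U. D z * co (fst z) (snd z)))"
      unfolding q_def by (simp add: sum.distrib sum_distrib_left sum_subtractf algebra_simps)
    also have "(\<Sum>z\<in>U \<times> U. D z * p (fst z) (snd z)) = transport_cost adj p"
      unfolding D_def by (rule cost_U[OF U, symmetric])
    also have "(\<Sum>z\<in>U \<times> U. D z * cn (fst z) (snd z)) = (\<Sum>i<L. D (xs (s i), ys i))"
      unfolding cn_def by (rule pair_sum) (use xsU in auto)
    also have "(\<Sum>z\<in>U \<times> U. D z * co (fst z) (snd z)) = (\<Sum>i<L. D (xs i, ys i))"
      unfolding co_def by (rule pair_sum) (use pos in auto)
    finally show ?thesis .
  qed
  moreover have "(\<Sum>i<L. D (xs (s i), ys i)) < (\<Sum>i<L. D (xs i, ys i))" using less unfolding D_def by simp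
  ultimately have "transport_cost adj q < W1 adj f0 f1"
  proof -
    assume c1: "transport_cost adj q = transport_cost adj p + e * ((\<Sum>i<L. D (xs (s i), ys i)) - (\<Sum>i<L. D (xs i, ys i)))"
      and c2: "(\<Sum>i<L. D (xs (s i), ys i)) < (\<Sum>i<L. D (xs i, ys i))"
    have "e * ((\<Sum>i<L. D (xs (s i), ys i)) - (\<Sum>i<L. D (xs i, ys i))) < 0"
      using c2 epos by (intro mult_pos_neg) auto
    thus ?thesis using c1 cst by linarith
  qed
  thus False using W1_le[OF cq, of adj] by simp
qed


context graph
begin

lemma orient_adj: "orient adj f0 f1 x y \<Longrightarrow> adj x y"
  unfolding orient_def by simp

lemma orient_plen:
  assumes p: "path_in (orient adj f0 f1) c"
  shows "length c = Suc (d (hd c) (last c))"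
proof -
  have ne: "c \<noteq> []" using p path_in_nonempty by auto
  have pa: "path_in adj c" using path_in_mono[OF p] orient_adj by blast
  define L where "L = length c - 1"
  have lenc: "length c = Suc L" using ne L_def by simp
  have up: "d (hd c) (last c) \<le> L" using gdist_le[OF pa] L_def by simp
  have hdc: "hd c = c ! 0" and lastc: "last c = c ! L" using ne L_def by (auto simp: hd_conv_nth last_conv_nth)
  show ?thesis
  proof (cases "L = 0")
    case True
    hence "hd c = last c" using hdc lastc by simp
    thus ?thesis using lenc True gdist_refl by simp
  next
    case False
    hence Lpos: "L > 0" by simp
    have edge: "orient adj f0 f1 (c ! i) (c ! Suc i)" if "i < L" for i
      using p that lenc unfolding path_in_def by auto
    have "\<forall>i. \<exists>t. i < L \<longrightarrow> (geodesic adj (fst t) \<and> snd (snd t) \<in> opt_couplings adj f0 f1 \<and>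
        snd (snd t) (hd (fst t)) (last (fst t)) > 0 \<and> Suc (fst (snd t)) < length (fst t) \<and>
        fst t ! fst (snd t) = c ! i \<and> fst t ! Suc (fst (snd t)) = c ! Suc i)"
    proof
      fix i
      show "\<exists>t. i < L \<longrightarrow> (geodesic adj (fst t) \<and> snd (snd t) \<in> opt_couplings adj f0 f1 \<and>
        snd (snd t) (hd (fst t)) (last (fst t)) > 0 \<and> Suc (fst (snd t)) < length (fst t) \<and>
        fst t ! fst (snd t) = c ! i \<and> fst t ! Suc (fst (snd t)) = c ! Suc i)"
      proof (cases "i < L")
        case True
        from edge[OF True] obtain g k where gk: "geodesic adj g" "(hd g, last g) \<in> Cset adj f0 f1"
          "Suc k < length g" "g ! k = c ! i" "g ! Suc k = c ! Suc i" unfolding orient_def by blast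
        from gk(2) obtain pp where pp: "pp \<in> opt_couplings adj f0 f1" "pp (hd g) (last g) > 0"
          unfolding Cset_def by auto
        show ?thesis apply (rule exI[where x = "(g, k, pp)"]) using gk pp by simp
      qed simp
    qed
    from choice[OF this] obtain T where T: "\<And>i. i < L \<Longrightarrow> geodesic adj (fst (T i)) \<and>
        snd (snd (T i)) \<in> opt_couplings adj f0 f1 \<and>
        snd (snd (T i)) (hd (fst (T i))) (last (fst (T i))) > 0 \<and>
        Suc (fst (snd (T i))) < length (fst (T i)) \<and>
        fst (T i) ! fst (snd (T i)) = c ! i \<and> fst (T i) ! Suc (fst (snd (T i))) = c ! Suc i" by blast
    define Ga where "Ga i = fst (T i)" for i
    define K where "K i = fst (snd (T i))" for i
    define Pi where "Pi i = snd (snd (T i))" for i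
    define xs where "xs i = hd (Ga i)" for i
    define ys where "ys i = last (Ga i)" for i
    define Dm where "Dm i = d (xs i) (ys i)" for i
    have g: "geodesic adj (Ga i)" "Pi i \<in> opt_couplings adj f0 f1" "Pi i (xs i) (ys i) > 0"
      "Suc (K i) < length (Ga i)" "Ga i ! K i = c ! i" "Ga i ! Suc (K i) = c ! Suc i" if "i < L" for i
      using T[OF that] unfolding Ga_def K_def Pi_def xs_def ys_def by auto
    have gp: "path_in adj (Ga i)" "length (Ga i) = Suc (Dm i)" if "i < L" for i
      using g(1)[OF that] unfolding geodesic_def Dm_def xs_def ys_def by auto
    have A: "d (xs i) (c ! i) \<le> K i" if i: "i < L" for i
    proof -
      note sp = path_split[OF gp(1)[OF i], of "K i"]
      have "K i < length (Ga i)" using g(4)[OF i] by simp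
      note sp = sp[OF this]
      have "d (hd (take (Suc (K i)) (Ga i))) (last (take (Suc (K i)) (Ga i))) \<le> length (take (Suc (K i)) (Ga i)) - 1"
        by (rule gdist_le[OF sp(2)])
      thus ?thesis using sp g(5)[OF i] g(4)[OF i] unfolding xs_def by simp
    qed
    have B: "d (c ! Suc i) (ys i) + K i + 1 \<le> Dm i" if i: "i < L" for i
    proof -
      have lt: "Suc (K i) < length (Ga i)" using g(4)[OF i] .
      have pd: "path_in adj (drop (Suc (K i)) (Ga i))" by (rule path_in_drop[OF gp(1)[OF i] lt])
      have "d (hd (drop (Suc (K i)) (Ga i))) (last (drop (Suc (K i)) (Ga i))) \<le> length (drop (Suc (K i)) (Ga i)) - 1"
        by (rule gdist_le[OF pd])
      moreover have "hd (drop (Suc (K i)) (Ga i)) = c ! Suc i" using lt g(6)[OF i] by (simp add: hd_drop_conv_nth)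
      moreover have "last (drop (Suc (K i)) (Ga i)) = ys i" using lt unfolding ys_def by simp
      ultimately show ?thesis using gp(2)[OF i] lt by simp
    qed
    define U where "U = (\<Union>i<L. fst ` fsupp (Pi i) \<union> snd ` fsupp (Pi i))"
    have fsi: "finite (fsupp (Pi i))" if "i < L" for i
      using g(2)[OF that] fsupp_coupling unfolding opt_couplings_def by blast
    have finU: "finite U" unfolding U_def using fsi by auto
    have suppU: "fsupp (Pi i) \<subseteq> U \<times> U" if "i < L" for i
      unfolding U_def using that by force
    define Q where "Q = (\<lambda>x y. (\<Sum>i<L. Pi i x y) / real L)"
    have av: "Q \<in> opt_couplings adj f0 f1" "fsupp Q \<subseteq> U \<times> U"
      "\<And>i x y. i < L \<Longrightarrow> Pi i x y > 0 \<Longrightarrow> Q x y > 0"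
      unfolding Q_def
      by (rule average_opt[of L Pi adj f0 f1 U]; (use Lpos g(2) finU suppU in auto)?)+
    have posQ: "xs i \<in> U \<and> ys i \<in> U \<and> Q (xs i) (ys i) > 0" if i: "i < L" for i
    proof -
      have "(xs i, ys i) \<in> fsupp (Pi i)" using g(3)[OF i] unfolding fsupp_def by auto
      hence "xs i \<in> U \<and> ys i \<in> U" using suppU[OF i] by auto
      thus ?thesis using av(3)[OF i g(3)[OF i]] by simp
    qed
    define s where "s i = (if Suc i = L then 0 else Suc i)" for i
    have bij: "bij_betw s {..<L} {..<L}"
      by (rule bij_betw_byWitness[where f' = "\<lambda>j. if j = 0 then L - 1 else j - 1"])
         (use Lpos in \<open>auto simp: s_def\<close>)
    have cm: "(\<Sum>i<L. real (d (xs i) (ys i))) \<le> (\<Sum>i<L. real (d (xs (s i)) (ys i)))"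
      by (rule cyc_mono[OF av(1) finU av(2) posQ bij])
    define del where "del = d (hd c) (last c)"
    have bnd: "real (d (xs (s i)) (ys i)) \<le> real (K (s i)) + real (Dm i) - real (K i) - 1 + (if i = L - 1 then real del else 0)"
      if i: "i < L" for i
    proof (cases "Suc i = L")
      case True
      hence si: "s i = 0" unfolding s_def by simp
      have "d (xs 0) (ys i) \<le> d (xs 0) (c ! 0) + d (c ! 0) (ys i)" by (rule gdist_tri)
      also have "d (c ! 0) (ys i) \<le> d (c ! 0) (c ! Suc i) + d (c ! Suc i) (ys i)" by (rule gdist_tri)
      finally have "d (xs 0) (ys i) \<le> K 0 + del + d (c ! Suc i) (ys i)"
        using A[OF Lpos] True hdc lastc unfolding del_def by simp
      hence h1: "real (d (xs 0) (ys i)) \<le> real (K 0) + real del + real (d (c ! Suc i) (ys i))"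
        by (simp only: of_nat_le_iff of_nat_add[symmetric])
      have "real (d (c ! Suc i) (ys i) + K i + 1) \<le> real (Dm i)" using B[OF i] by (simp only: of_nat_le_iff)
      hence h2: "real (d (c ! Suc i) (ys i)) + real (K i) + 1 \<le> real (Dm i)" by simp
      have e: "(if i = L - 1 then real del else 0) = real del" using True by simp
      have "real (d (xs (s i)) (ys i)) \<le> real (K (s i)) + real (Dm i) - real (K i) - 1 + real del"
        using h1 h2 si by simp
      thus ?thesis using e by simp
    next
      case False
      hence si: "s i = Suc i" "Suc i < L" using i unfolding s_def by auto
      have "d (xs (Suc i)) (ys i) \<le> d (xs (Suc i)) (c ! Suc i) + d (c ! Suc i) (ys i)" by (rule gdist_tri)
      hence "d (xs (Suc i)) (ys i) + K i + 1 \<le> K (Suc i) + Dm i" using A[OF si(2)] B[OF i] by simp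
      hence h: "real (d (xs (Suc i)) (ys i) + K i + 1) \<le> real (K (Suc i) + Dm i)" by (simp only: of_nat_le_iff)
      have e: "(if i = L - 1 then real del else 0) = 0" using si by auto
      show ?thesis unfolding e using h si by simp
    qed
    have "(\<Sum>i<L. real (d (xs (s i)) (ys i))) \<le>
        (\<Sum>i<L. real (K (s i)) + real (Dm i) - real (K i) - 1 + (if i = L - 1 then real del else 0))"
      by (rule sum_mono) (use bnd in auto)
    also have "\<dots> = (\<Sum>i<L. real (K (s i))) + (\<Sum>i<L. real (Dm i)) - (\<Sum>i<L. real (K i)) - real L + real del"
      using Lpos by (simp add: sum.distrib sum_subtractf)
    also have "(\<Sum>i<L. real (K (s i))) = (\<Sum>i<L. real (K i))"
      using sum.reindex_bij_betw[OF bij, of "\<lambda>i. real (K i)"] by simp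
    finally have "(\<Sum>i<L. real (Dm i)) \<le> (\<Sum>i<L. real (Dm i)) - real L + real del"
      using cm unfolding Dm_def by simp
    hence "L \<le> del" by simp
    thus ?thesis using up lenc unfolding del_def by simp
  qed
qed

end


lemma Bset_conv: "Bset (\<lambda>x y. R y x) = Aset R" and Aset_conv: "Aset (\<lambda>x y. R y x) = Bset R"
  unfolding Aset_def Bset_def fwd_def bwd_def by auto

lemma path_in_conv: "path_in (\<lambda>x y. R y x) c \<longleftrightarrow> path_in R (rev c)"
  by (simp only: path_in_rev)

lemma path_in_conv_rev: "path_in (\<lambda>x y. R y x) (rev c) \<longleftrightarrow> path_in R c"
  using path_in_rev[of "\<lambda>x y. R y x" c] by simp

lemma oleq_conv: "oleq (\<lambda>x y. R y x) y z \<longleftrightarrow> oleq R z y"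
proof
  assume "oleq (\<lambda>x y. R y x) y z"
  then obtain c where c: "path_in (\<lambda>x y. R y x) c" "hd c = y" "last c = z" unfolding oleq_def by auto
  have ne: "c \<noteq> []" using path_in_nonempty[OF c(1)] .
  show "oleq R z y" unfolding oleq_def
    by (intro exI[of _ "rev c"]) (use c ne path_in_rev[of R c] in \<open>simp add: hd_rev last_rev\<close>)
next
  assume "oleq R z y"
  then obtain c where c: "path_in R c" "hd c = z" "last c = y" unfolding oleq_def by auto
  hence "path_in (\<lambda>x y. R y x) (rev c)" by (simp only: path_in_conv_rev)
  moreover have ne: "c \<noteq> []" using path_in_nonempty[OF c(1)] .
  ultimately show "oleq (\<lambda>x y. R y x) y z" unfolding oleq_def
    by (intro exI[of _ "rev c"]) (use c in \<open>simp add: hd_rev last_rev\<close>)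
qed

lemma extremal_conv: "extremal (\<lambda>x y. R y x) (rev c) \<longleftrightarrow> extremal R c"
proof -
  have "path_in (\<lambda>x y. R y x) (rev c) \<longleftrightarrow> path_in R c" by (rule path_in_conv_rev)
  moreover have "c \<noteq> [] \<Longrightarrow> hd (rev c) = last c \<and> last (rev c) = hd c" by (simp add: hd_rev last_rev)
  ultimately show ?thesis unfolding extremal_def Bset_conv[of R] Aset_conv[of R]
    by (metis path_in_nonempty)
qed

lemma idx_conv:
  "(\<exists>i j. i \<le> j \<and> j < length (rev c) \<and> rev c ! i = y \<and> rev c ! j = z) \<longleftrightarrow>
   (\<exists>i j. i \<le> j \<and> j < length c \<and> c ! i = z \<and> c ! j = y)"
proof
  assume "\<exists>i j. i \<le> j \<and> j < length (rev c) \<and> rev c ! i = y \<and> rev c ! j = z"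
  then obtain i j where ij: "i \<le> j" "j < length c" "rev c ! i = y" "rev c ! j = z" by auto
  show "\<exists>i j. i \<le> j \<and> j < length c \<and> c ! i = z \<and> c ! j = y"
    by (rule exI[of _ "length c - 1 - j"], rule exI[of _ "length c - 1 - i"]) (use ij in \<open>auto simp: rev_nth\<close>)
next
  assume "\<exists>i j. i \<le> j \<and> j < length c \<and> c ! i = z \<and> c ! j = y"
  then obtain i j where ij: "i \<le> j" "j < length c" "c ! i = z" "c ! j = y" by auto
  have e1: "rev c ! (length c - 1 - j) = y" using ij by (simp add: rev_nth)
  have e2: "rev c ! (length c - 1 - i) = z" using ij by (simp add: rev_nth)
  show "\<exists>i j. i \<le> j \<and> j < length (rev c) \<and> rev c ! i = y \<and> rev c ! j = z"
    by (rule exI[of _ "length c - 1 - j"], rule exI[of _ "length c - 1 - i"]) (use ij e1 e2 in auto)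
qed

context graph
begin

lemma Cset_supp:
  assumes "(p, q) \<in> Cset adj f0 f1"
  shows "f0 p > 0" "f1 q > 0"
proof -
  obtain pp where pp: "pp \<in> opt_couplings adj f0 f1" "pp p q > 0" using assms unfolding Cset_def by auto
  have cp: "coupling f0 f1 pp" using pp unfolding opt_couplings_def by auto
  have nn: "\<And>x y. pp x y \<ge> 0" using cp unfolding coupling_def by auto
  have fs: "finite {(x, y). pp x y \<noteq> 0}" using cp unfolding coupling_def by auto
  have f1: "finite {y. pp p y \<noteq> 0}"
    by (rule finite_subset[of _ "snd ` {(x, y). pp x y \<noteq> 0}"]) (use fs in force)+
  have f2: "finite {x. pp x q \<noteq> 0}"
    by (rule finite_subset[of _ "fst ` {(x, y). pp x y \<noteq> 0}"]) (use fs in force)+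
  have "pp p q \<le> (\<Sum>y\<in>{y. pp p y \<noteq> 0}. pp p y)"
    by (rule member_le_sum) (use pp nn f1 in auto)
  thus "f0 p > 0" using cp pp unfolding coupling_def by force
  have "pp p q \<le> (\<Sum>x\<in>{x. pp x q \<noteq> 0}. pp x q)"
    by (rule member_le_sum) (use pp nn f2 in auto)
  thus "f1 q > 0" using cp pp unfolding coupling_def by force
qed

lemma orient_vertices:
  assumes "prob_dist f0" "prob_dist f1"
  shows "finite {x. \<exists>y. orient adj f0 f1 x y \<or> orient adj f0 f1 y x}"
proof -
  define S where "S = {x. f0 x \<noteq> 0} \<times> {x. f1 x \<noteq> 0}"
  have finS: "finite S" using assms unfolding S_def prob_dist_def by auto
  define P where "P pq = {c. path_in adj c \<and> hd c = fst pq \<and> length c \<le> Suc (d (fst pq) (snd pq))}" for pq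
  have finP: "finite (P pq)" for pq unfolding P_def by (rule finite_paths_len) (use loc_fin in auto)
  have "{x. \<exists>y. orient adj f0 f1 x y \<or> orient adj f0 f1 y x} \<subseteq> (\<Union>pq\<in>S. \<Union>c\<in>P pq. set c)"
  proof
    fix x assume "x \<in> {x. \<exists>y. orient adj f0 f1 x y \<or> orient adj f0 f1 y x}"
    then obtain c k where c: "geodesic adj c" "(hd c, last c) \<in> Cset adj f0 f1" "Suc k < length c"
      "c ! k = x \<or> c ! Suc k = x" unfolding orient_def by blast
    have kk: "k < length c" "Suc k < length c" using c(3) by auto
    hence "c ! k \<in> set c" "c ! Suc k \<in> set c" by (auto intro: nth_mem)
    hence xc: "x \<in> set c" using c(4) by auto
    have "(hd c, last c) \<in> S" using Cset_supp[OF c(2)] unfolding S_def by auto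
    moreover have "c \<in> P (hd c, last c)" using c(1) unfolding P_def geodesic_def by auto
    moreover note xc
    ultimately show "x \<in> (\<Union>pq\<in>S. \<Union>c\<in>P pq. set c)" by blast
  qed
  moreover have "finite (\<Union>pq\<in>S. \<Union>c\<in>P pq. set c)" using finS finP by auto
  ultimately show ?thesis by (rule finite_subset)
qed

lemma orient_bound:
  assumes "prob_dist f0" "prob_dist f1"
  shows "\<exists>N. \<forall>c. path_in (orient adj f0 f1) c \<longrightarrow> length c \<le> N"
proof -
  define V where "V = {x. \<exists>y. orient adj f0 f1 x y \<or> orient adj f0 f1 y x}"
  have fV: "finite V" using orient_vertices[OF assms] unfolding V_def .
  define N where "N = Suc (Suc (Max ((\<lambda>(u, v). d u v) ` (V \<times> V))))"
  have "length c \<le> N" if p: "path_in (orient adj f0 f1) c" for c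
  proof (cases "length c \<ge> 2")
    case True
    have ne: "c \<noteq> []" using path_in_nonempty[OF p] .
    have "orient adj f0 f1 (c ! 0) (c ! Suc 0)" using p True unfolding path_in_def by auto
    moreover have "hd c = c ! 0" using ne by (simp add: hd_conv_nth)
    ultimately have "hd c \<in> V" unfolding V_def by auto
    have "orient adj f0 f1 (c ! (length c - 2)) (c ! Suc (length c - 2))" using p True unfolding path_in_def by auto
    moreover have "last c = c ! Suc (length c - 2)"
    proof -
      have e: "Suc (length c - 2) = length c - 1" using True by simp
      show ?thesis unfolding e using ne by (simp add: last_conv_nth)
    qed
    ultimately have "last c \<in> V" unfolding V_def by auto
    have mem: "d (hd c) (last c) \<in> (\<lambda>(u, v). d u v) ` (V \<times> V)"
      by (rule image_eqI[where x = "(hd c, last c)"]) (use \<open>hd c \<in> V\<close> \<open>last c \<in> V\<close> in auto)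
    have fin: "finite ((\<lambda>(u, v). d u v) ` (V \<times> V))" using fV by simp
    have "d (hd c) (last c) \<le> Max ((\<lambda>(u, v). d u v) ` (V \<times> V))" by (rule Max_ge[OF fin mem])
    thus ?thesis using orient_plen[OF p] unfolding N_def by simp
  next
    case False thus ?thesis unfolding N_def by simp
  qed
  thus ?thesis by blast
qed

end


lemma rev_time_deriv:
  assumes "(phi has_real_derivative D) (at (1 - t) within {0..1})"
  shows "((\<lambda>s. phi (1 - s)) has_real_derivative (- D)) (at t within {0..1})"
proof -
  have img: "(\<lambda>s. 1 - s) ` {0..1::real} = {0..1}"
  proof (rule set_eqI)
    fix y :: real
    show "y \<in> (\<lambda>s. 1 - s) ` {0..1} \<longleftrightarrow> y \<in> {0..1}"
      by (auto intro: image_eqI[where x = "1 - y"])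
  qed
  have d2: "((\<lambda>s. 1 - s) has_real_derivative -1) (at t within {0..1})"
    by (intro derivative_eq_intros) auto
  have "(phi \<circ> (\<lambda>s. 1 - s) has_real_derivative D * -1) (at t within {0..1})"
    by (rule DERIV_image_chain[OF _ d2]) (use assms img in simp)
  thus ?thesis by (simp add: o_def)
qed

theorem proposition3p14:
  fixes adj :: "'v \<Rightarrow> 'v \<Rightarrow> bool"
    and f :: "real \<Rightarrow> 'v \<Rightarrow> real"
    and g :: "real \<Rightarrow> 'v \<Rightarrow> 'v \<Rightarrow> real"
    and h :: "real \<Rightarrow> 'v \<Rightarrow> 'v \<Rightarrow> 'v \<Rightarrow> real"
  assumes sym: "\<forall>x y. adj x y \<longrightarrow> adj y x"
    and irrefl: "\<forall>x. \<not> adj x x"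
    and loc_fin: "\<forall>x. finite {y. adj x y}"
    and connected: "\<forall>x y. \<exists>\<gamma>. path_in adj \<gamma> \<and> hd \<gamma> = x \<and> last \<gamma> = y"
    and geod: "W1plus_geodesic adj f g h"
  shows "\<exists>a b :: 'v \<Rightarrow> real. \<forall>t\<in>{0..1}. \<forall>z.
     Pt (orient adj (f 0) (f 1)) f g t z =
       (1 / mval (orient adj (f 0) (f 1)) f g [z]) *
       (\<Sum>x\<in>{x. oleq (orient adj (f 0) (f 1)) x z}.
          mval (orient adj (f 0) (f 1)) f g [x, z] * a x * t ^ gdist adj x z / fact (gdist adj x z))
   \<and> Qt (orient adj (f 0) (f 1)) f g t z =
       (1 / mval (orient adj (f 0) (f 1)) f g [z]) *
       (\<Sum>y\<in>{y. oleq (orient adj (f 0) (f 1)) z y}.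
          mval (orient adj (f 0) (f 1)) f g [z, y] * b y * (1 - t) ^ gdist adj z y / fact (gdist adj z y))"
proof -
  interpret graph adj using sym loc_fin connected by unfold_locales
  define arr where "arr = orient adj (f 0) (f 1)"
  have GG: "(\<forall>t\<in>{0..1}. prob_dist (f t)) \<and>
     (\<forall>x. \<forall>t\<in>{0..1}. ((\<lambda>s. f s x) has_real_derivative (- div_g arr (g t) x)) (at t within {0..1})) \<and>
     (\<forall>x1 x2. arr x1 x2 \<longrightarrow> (\<forall>t\<in>{0..1}.
        ((\<lambda>s. g s x1 x2) has_real_derivative (- div_h arr (h t) x1 x2)) (at t within {0..1}))) \<and>
     (\<forall>x1 x2. arr x1 x2 \<longrightarrow> (\<forall>t\<in>{0..1}. g t x1 x2 > 0)) \<and>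
     (\<forall>x0 x1 x2. arr x0 x1 \<longrightarrow> arr x1 x2 \<longrightarrow> (\<forall>t\<in>{0..1}.
        f t x1 * h t x0 x1 x2 = g t x0 x1 * g t x1 x2))"
    using geod unfolding W1plus_geodesic_def Let_def arr_def by blast
  have pd: "\<And>t. t \<in> {0..1} \<Longrightarrow> prob_dist (f t)" using GG by blast
  have dF: "\<And>x t. t \<in> {0..1} \<Longrightarrow> ((\<lambda>s. f s x) has_real_derivative (- div_g arr (g t) x)) (at t within {0..1})"
    using GG by blast
  have dG: "\<And>x1 x2 t. arr x1 x2 \<Longrightarrow> t \<in> {0..1} \<Longrightarrow>
        ((\<lambda>s. g s x1 x2) has_real_derivative (- div_h arr (h t) x1 x2)) (at t within {0..1})"
    using GG by blast
  have gpos: "\<And>x1 x2 t. arr x1 x2 \<Longrightarrow> t \<in> {0..1} \<Longrightarrow> g t x1 x2 > 0" using GG by blast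
  have fh: "\<And>x0 x1 x2 t. arr x0 x1 \<Longrightarrow> arr x1 x2 \<Longrightarrow> t \<in> {0..1} \<Longrightarrow>
        f t x1 * h t x0 x1 x2 = g t x0 x1 * g t x1 x2" using GG by blast
  have fnn: "\<And>x t. t \<in> {0..1} \<Longrightarrow> f t x \<ge> 0" using pd unfolding prob_dist_def by blast
  have p0: "prob_dist (f 0)" and p1: "prob_dist (f 1)" using pd by auto
  obtain N where N: "\<And>c. path_in arr c \<Longrightarrow> length c \<le> N"
    using orient_bound[OF p0 p1] unfolding arr_def by blast
  have arr_adj: "\<And>x y. arr x y \<Longrightarrow> adj x y" unfolding arr_def using orient_adj by blast
  have fin_f: "\<And>x. finite {y. arr x y}"
    using loc_fin arr_adj by (metis (mono_tags, lifting) finite_subset mem_Collect_eq subsetI)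
  have fin_b: "\<And>x. finite {y. arr y x}"
  proof -
    fix x
    have "{y. arr y x} \<subseteq> {y. adj x y}" using arr_adj sym by blast
    thus "finite {y. arr y x}" using loc_fin finite_subset by blast
  qed
  have plen: "\<And>c. path_in arr c \<Longrightarrow> length c = Suc (gdist adj (hd c) (last c))"
    unfolding arr_def by (rule orient_plen)
  interpret G1: geo arr f g h "gdist adj" N
    by unfold_locales (fact fin_f fin_b plen N dF dG gpos fh fnn)+
  define arr' where "arr' = (\<lambda>x y. arr y x)"
  define f' where "f' = (\<lambda>t x. f (1 - t) x)"
  define g' where "g' = (\<lambda>t x y. g (1 - t) y x)"
  define h' where "h' = (\<lambda>t x y z. h (1 - t) z y x)"
  have t1: "\<And>t::real. t \<in> {0..1} \<Longrightarrow> 1 - t \<in> {0..1}" by auto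
  interpret G2: geo arr' f' g' h' "gdist adj" N
  proof unfold_locales
    fix x show "finite {y. arr' x y}" unfolding arr'_def by (rule fin_b)
    show "finite {y. arr' y x}" unfolding arr'_def by (rule fin_f)
  next
    fix c assume c: "path_in arr' c"
    hence rc: "path_in arr (rev c)" unfolding arr'_def path_in_conv[of arr] .
    have ne: "c \<noteq> []" using path_in_nonempty[OF c] .
    show "length c = Suc (gdist adj (hd c) (last c))"
      using plen[OF rc] ne gdist_sym by (simp add: hd_rev last_rev)
    show "length c \<le> N" using N[OF rc] by simp
  next
    fix x and t :: real assume t: "t \<in> {0..1}"
    have "((\<lambda>s. f (1 - s) x) has_real_derivative (- (- div_g arr (g (1 - t)) x))) (at t within {0..1})"
      by (rule rev_time_deriv) (rule dF[OF t1[OF t]])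
    moreover have "- (- div_g arr (g (1 - t)) x) = - div_g arr' (g' t) x"
      unfolding div_g_def fwd_def bwd_def arr'_def g'_def by simp
    ultimately show "((\<lambda>s. f' s x) has_real_derivative (- div_g arr' (g' t) x)) (at t within {0..1})"
      unfolding f'_def by simp
  next
    fix x1 x2 and t :: real assume a: "arr' x1 x2" and t: "t \<in> {0..1}"
    have a': "arr x2 x1" using a unfolding arr'_def .
    have "((\<lambda>s. g (1 - s) x2 x1) has_real_derivative (- (- div_h arr (h (1 - t)) x2 x1))) (at t within {0..1})"
      by (rule rev_time_deriv) (rule dG[OF a' t1[OF t]])
    moreover have "- (- div_h arr (h (1 - t)) x2 x1) = - div_h arr' (h' t) x1 x2"
      unfolding div_h_def fwd_def bwd_def arr'_def h'_def by simp
    ultimately show "((\<lambda>s. g' s x1 x2) has_real_derivative (- div_h arr' (h' t) x1 x2)) (at t within {0..1})"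
      unfolding g'_def by simp
  next
    fix x1 x2 and t :: real assume a: "arr' x1 x2" and t: "t \<in> {0..1}"
    show "g' t x1 x2 > 0" using gpos[of x2 x1 "1 - t"] a t unfolding arr'_def g'_def by auto
  next
    fix x0 x1 x2 and t :: real assume a: "arr' x0 x1" "arr' x1 x2" and t: "t \<in> {0..1}"
    show "f' t x1 * h' t x0 x1 x2 = g' t x0 x1 * g' t x1 x2"
      using fh[of x2 x1 x0 "1 - t"] a t unfolding arr'_def f'_def g'_def h'_def by (auto simp: mult.commute)
  next
    fix x and t :: real assume t: "t \<in> {0..1}"
    show "f' t x \<ge> 0" unfolding f'_def using fnn t1[OF t] by blast
  qed
  obtain a where a: "\<And>t z. t \<in> {0..1} \<Longrightarrow> (\<Sum>c\<in>G1.SE2 z. Cpath f g t c) =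
     (\<Sum>x\<in>{x. oleq arr x z}. mval arr f g [x, z] * a x * t ^ gdist adj x z / fact (gdist adj x z))"
    using G1.P_formula by blast
  obtain b where b: "\<And>t z. t \<in> {0..1} \<Longrightarrow> (\<Sum>c\<in>G2.SE2 z. Cpath f' g' t c) =
     (\<Sum>x\<in>{x. oleq arr' x z}. mval arr' f' g' [x, z] * b x * t ^ gdist adj x z / fact (gdist adj x z))"
    using G2.P_formula by blast
  have SE2rev: "G2.SE2 z = rev ` {c. path_in arr c \<and> hd c \<in> Aset arr \<and> last c = z}" for z
  proof (rule set_eqI, rule iffI)
    fix c assume "c \<in> G2.SE2 z"
    hence c: "path_in arr' c" "hd c = z" "last c \<in> Bset arr'" unfolding G2.SE2_def by auto
    have ne: "c \<noteq> []" using path_in_nonempty[OF c(1)] .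
    have "rev c \<in> {c. path_in arr c \<and> hd c \<in> Aset arr \<and> last c = z}"
      using c ne unfolding arr'_def path_in_conv[of arr] Bset_conv[of arr] by (simp add: hd_rev last_rev)
    thus "c \<in> rev ` {c. path_in arr c \<and> hd c \<in> Aset arr \<and> last c = z}"
      by (intro image_eqI[where x = "rev c"]) auto
  next
    fix c assume "c \<in> rev ` {c. path_in arr c \<and> hd c \<in> Aset arr \<and> last c = z}"
    then obtain d where d: "c = rev d" "path_in arr d" "hd d \<in> Aset arr" "last d = z" by auto
    have ne: "d \<noteq> []" using path_in_nonempty[OF d(2)] .
    show "c \<in> G2.SE2 z" unfolding G2.SE2_def unfolding arr'_def d(1) path_in_conv_rev[of arr] Bset_conv[of arr]
      using d ne path_in_conv_rev[of arr d] by (simp add: hd_rev last_rev)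
  qed
  have Ext2rev: "G2.Ext2 y z = rev ` G1.Ext2 z y" for y z
  proof (rule set_eqI, rule iffI)
    fix c assume "c \<in> G2.Ext2 y z"
    hence h: "extremal arr' c" "\<exists>i j. i \<le> j \<and> j < length c \<and> c ! i = y \<and> c ! j = z"
      unfolding G2.Ext2_def by auto
    have "extremal arr (rev c)" using h(1) extremal_conv[of arr "rev c"] unfolding arr'_def by simp
    moreover have "\<exists>i j. i \<le> j \<and> j < length (rev c) \<and> rev c ! i = z \<and> rev c ! j = y"
      using h(2) idx_conv[of "rev c" y z] by simp
    ultimately have "rev c \<in> G1.Ext2 z y" unfolding G1.Ext2_def by simp
    thus "c \<in> rev ` G1.Ext2 z y" by (intro image_eqI[where x = "rev c"]) auto
  next
    fix c assume "c \<in> rev ` G1.Ext2 z y"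
    then obtain d where d: "c = rev d" "d \<in> G1.Ext2 z y" by auto
    hence h: "extremal arr d" "\<exists>i j. i \<le> j \<and> j < length d \<and> d ! i = z \<and> d ! j = y"
      unfolding G1.Ext2_def by auto
    have "extremal arr' (rev d)" using h(1) extremal_conv[of arr d] unfolding arr'_def by simp
    moreover have "\<exists>i j. i \<le> j \<and> j < length (rev d) \<and> rev d ! i = y \<and> rev d ! j = z"
      using h(2) idx_conv[of d y z] by simp
    ultimately show "c \<in> G2.Ext2 y z" unfolding G2.Ext2_def d(1) by simp
  qed
  have mv: "mval arr' f' g' [y, z] = mval arr f g [z, y]" for y z
  proof -
    have "mval arr' f' g' [y, z] = (\<Sum>c\<in>G2.Ext2 y z. Cpath f' g' 0 c)" by (rule G2.mval2)
    also have "\<dots> = (\<Sum>c\<in>G1.Ext2 z y. Cpath f' g' 0 (rev c))"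
      unfolding Ext2rev by (subst sum.reindex) (auto simp: inj_on_def)
    also have "\<dots> = (\<Sum>c\<in>G1.Ext2 z y. Cpath f g 0 c)"
    proof (rule sum.cong[OF refl])
      fix c assume "c \<in> G1.Ext2 z y"
      hence e: "extremal arr c" unfolding G1.Ext2_def by auto
      have "Cpath f' g' 0 (rev c) = Cpath f g 1 c" by (rule Cpath_rev) (simp_all add: f'_def g'_def)
      also have "\<dots> = Cpath f g 0 c" by (rule G1.C_extremal_const[OF e]) simp
      finally show "Cpath f' g' 0 (rev c) = Cpath f g 0 c" .
    qed
    also have "\<dots> = mval arr f g [z, y]" by (rule G1.mval2[symmetric])
    finally show ?thesis .
  qed
  have main: "\<forall>t\<in>{0..1}. \<forall>z.
     Pt (orient adj (f 0) (f 1)) f g t z =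
       (1 / mval (orient adj (f 0) (f 1)) f g [z]) *
       (\<Sum>x\<in>{x. oleq (orient adj (f 0) (f 1)) x z}.
          mval (orient adj (f 0) (f 1)) f g [x, z] * a x * t ^ gdist adj x z / fact (gdist adj x z))
   \<and> Qt (orient adj (f 0) (f 1)) f g t z =
       (1 / mval (orient adj (f 0) (f 1)) f g [z]) *
       (\<Sum>y\<in>{y. oleq (orient adj (f 0) (f 1)) z y}.
          mval (orient adj (f 0) (f 1)) f g [z, y] * b y * (1 - t) ^ gdist adj z y / fact (gdist adj z y))"
  proof (intro ballI allI conjI)
    fix t :: real and z assume t: "t \<in> {0..1}"
    show "Pt (orient adj (f 0) (f 1)) f g t z =
       (1 / mval (orient adj (f 0) (f 1)) f g [z]) *
       (\<Sum>x\<in>{x. oleq (orient adj (f 0) (f 1)) x z}.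
          mval (orient adj (f 0) (f 1)) f g [x, z] * a x * t ^ gdist adj x z / fact (gdist adj x z))"
      unfolding arr_def[symmetric] Pt_def using a[OF t, of z] by (simp add: G1.SE2_def)
    have "(\<Sum>c\<in>{c. path_in arr c \<and> hd c \<in> Aset arr \<and> last c = z}. Cpath f g t c) =
          (\<Sum>c\<in>G2.SE2 z. Cpath f' g' (1 - t) c)"
    proof -
      have "(\<Sum>c\<in>G2.SE2 z. Cpath f' g' (1 - t) c) =
            (\<Sum>c\<in>{c. path_in arr c \<and> hd c \<in> Aset arr \<and> last c = z}. Cpath f' g' (1 - t) (rev c))"
        unfolding SE2rev by (subst sum.reindex) (auto simp: inj_on_def)
      also have "\<dots> = (\<Sum>c\<in>{c. path_in arr c \<and> hd c \<in> Aset arr \<and> last c = z}. Cpath f g t c)"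
        by (rule sum.cong[OF refl], rule Cpath_rev) (simp_all add: f'_def g'_def)
      finally show ?thesis by simp
    qed
    also have "\<dots> = (\<Sum>y\<in>{y. oleq arr' y z}. mval arr' f' g' [y, z] * b y * (1 - t) ^ gdist adj y z / fact (gdist adj y z))"
      by (rule b) (use t in auto)
    also have "\<dots> = (\<Sum>y\<in>{y. oleq arr z y}. mval arr f g [z, y] * b y * (1 - t) ^ gdist adj z y / fact (gdist adj z y))"
      unfolding arr'_def oleq_conv[of arr] mv[unfolded arr'_def] using gdist_sym by simp
    finally have X: "Qt arr f g t z = (1 / mval arr f g [z]) *
       (\<Sum>y\<in>{y. oleq arr z y}. mval arr f g [z, y] * b y * (1 - t) ^ gdist adj z y / fact (gdist adj z y))"
      unfolding Qt_def by simp
    show "Qt (orient adj (f 0) (f 1)) f g t z =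
       (1 / mval (orient adj (f 0) (f 1)) f g [z]) *
       (\<Sum>y\<in>{y. oleq (orient adj (f 0) (f 1)) z y}.
          mval (orient adj (f 0) (f 1)) f g [z, y] * b y * (1 - t) ^ gdist adj z y / fact (gdist adj z y))"
      using X unfolding arr_def .
  qed
  show ?thesis by (rule exI[of _ a], rule exI[of _ b]) (rule main)
qed


end
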